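(* In the social learning model with Gaussian signals of variance $\sigma^2>0$, conditioned on $\theta=+1$, $$\lim_{t\to\infty}\frac{\ell_t}{(2\sqrt{2}/\sigma)\sqrt{\log t}}=1$$ with probability $1$.
   Context: Social learning model. A state $\theta\in\{-1,+1\}$ is drawn with $\mathbb{P}(\theta=+1)=\mathbb{P}(\theta=-1)=1/2$. Agents $t=1,2,\dots$ receive private signals $s_t\in\mathbb{R}$ that are i.i.d. conditionally on $\theta$, with CDF $F_+$ if $\theta=+1$ and $F_-$ if $\theta=-1$; $F_+$ and $F_-$ are mutually absolutely continuous. Let $L_t=\log\frac{\mathbb{P}(\theta=+1\mid s_t)}{\mathbb{P}(\theta=-1\mid s_t)}$ be the private log-likelihood ratio, and let $G_+$, $G_-$ denote the CDFs of $L_t$ conditional on $\theta=+1$, $\theta=-1$ respectively. Signals are assumed unbounded: for every $M\in\mathbb{R}$, $\mathbb{P}(L_t>M)>0$ and $\mathbb{P}(L_t<-M)>0$. Agent $t$ observes $a_1,\dots,a_{t-1}$ and her own signal and chooses $a_t\in\{-1,+1\}$ (utility $1$ if $a_t=\theta$, else $0$). The public belief is $\mu_t=\mathbb{P}(\theta=+1\mid a_1,\dots,a_{t-1})$ and $\ell_t=\log\frac{\mu_t}{1-\mu_t}$ (so $\ell_1=0$). In equilibrium $a_t=+1$ iff $\ell_t+L_t>0$, and otherwise $a_t=-1$. Consequently $\ell_{t+1}=\ell_t+D_+(\ell_t)$ if $a_t=+1$ and $\ell_{t+1}=\ell_t+D_-(\ell_t)$ if $a_t=-1$, where $D_+(x)=\log\frac{1-G_+(-x)}{1-G_-(-x)}$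 and $D_-(x)=\log\frac{G_+(-x)}{G_-(-x)}$. We write $\mathbb{P}_+(\cdot)=\mathbb{P}(\cdot\mid\theta=+1)$ and $\mathbb{E}_+$ for the corresponding expectation. Gaussian signals: $F_+$ is the normal distribution with mean $+1$ and variance $\sigma^2$, and $F_-$ is the normal distribution with mean $-1$ and variance $\sigma^2$. *)

theory Defs
  imports "HOL-Probability.Probability"
begin

definition sig_density :: "real \<Rightarrow> int \<Rightarrow> real \<Rightarrow> real" where
  "sig_density \<sigma> \<theta> x = normal_density (real_of_int \<theta>) \<sigma> x"

definition post_plus :: "real \<Rightarrow> real \<Rightarrow> real" where
  "post_plus \<sigma> x = (1/2 * sig_density \<sigma> 1 x) /
      (1/2 * sig_density \<sigma> 1 x + 1/2 * sig_density \<sigma> (-1) x)"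

definition private_llr :: "real \<Rightarrow> real \<Rightarrow> real" where
  "private_llr \<sigma> x = ln (post_plus \<sigma> x / (1 - post_plus \<sigma> x))"

definition sig_dist :: "real \<Rightarrow> int \<Rightarrow> real measure" where
  "sig_dist \<sigma> \<theta> = density lborel (\<lambda>x. ennreal (sig_density \<sigma> \<theta> x))"

definition G :: "real \<Rightarrow> int \<Rightarrow> real \<Rightarrow> real" where
  "G \<sigma> \<theta> y = measure (sig_dist \<sigma> \<theta>) {x. private_llr \<sigma> x \<le> y}"

definition D_plus :: "real \<Rightarrow> real \<Rightarrow> real" where
  "D_plus \<sigma> x = ln ((1 - G \<sigma> 1 (-x)) / (1 - G \<sigma> (-1) (-x)))"

definition D_minus :: "real \<Rightarrow> real \<Rightarrow> real" where
  "D_minus \<sigma> x = ln (G \<sigma> 1 (-x) / G \<sigma> (-1) (-x))"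

definition action :: "real \<Rightarrow> real \<Rightarrow> real \<Rightarrow> int" where
  "action \<sigma> l x = (if l + private_llr \<sigma> x > 0 then 1 else -1)"

definition llr_update :: "real \<Rightarrow> real \<Rightarrow> int \<Rightarrow> real" where
  "llr_update \<sigma> l a = (if a = 1 then l + D_plus \<sigma> l else l + D_minus \<sigma> l)"

text \<open>ell_aux n = public LLR of agent n+1, where agent t receives signal s (t-1).\<close>
primrec ell_aux :: "real \<Rightarrow> (nat \<Rightarrow> real) \<Rightarrow> nat \<Rightarrow> real" where
  "ell_aux \<sigma> sig 0 = 0"
| "ell_aux \<sigma> sig (Suc n) =
     llr_update \<sigma> (ell_aux \<sigma> sig n) (action \<sigma> (ell_aux \<sigma> sig n) (sig n))"

text \<open>Public LLR ell_t for t >= 1 (ell_1 = 0); signal of agent t is s (t - 1).\<close>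
definition public_llr :: "real \<Rightarrow> (nat \<Rightarrow> real) \<Rightarrow> nat \<Rightarrow> real" where
  "public_llr \<sigma> sig t = ell_aux \<sigma> sig (t - 1)"

end

theory Submission
  imports Defs "HOL-Real_Asymp.Real_Asymp"
begin

definition Pm :: "real \<Rightarrow> real \<Rightarrow> real \<Rightarrow> real" where
  "Pm \<mu> \<sigma> v = measure (density lborel (\<lambda>x. ennreal (normal_density \<mu> \<sigma> x))) {..v}"

lemma private_llr_eq:
  assumes "\<sigma> > 0" shows "private_llr \<sigma> x = 2 * x / \<sigma>\<^sup>2"
proof -
  define a where "a = sig_density \<sigma> 1 x"
  define b where "b = sig_density \<sigma> (-1) x"
  have a: "a > 0" and b: "b > 0" using assms by (auto simp: a_def b_def sig_density_def normal_density_pos)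
  have "post_plus \<sigma> x / (1 - post_plus \<sigma> x) = a / b"
  proof -
    have e: "post_plus \<sigma> x = a / (a + b)" unfolding post_plus_def a_def b_def by (simp add: field_simps)
    have "1 - a / (a + b) = b / (a + b)" using a b by (simp add: field_simps)
    then show ?thesis using a b unfolding e by (simp add: divide_simps)
  qed
  also have "a / b = exp (2 * x / \<sigma>\<^sup>2)"
    using assms unfolding a_def b_def sig_density_def normal_density_def
    by (simp add: exp_diff[symmetric] field_simps power2_eq_square)
  finally show ?thesis unfolding private_llr_def by simp
qed

abbreviation ND :: "real \<Rightarrow> real \<Rightarrow> real measure" where
  "ND \<mu> \<sigma> \<equiv> density lborel (\<lambda>x. ennreal (normal_density \<mu> \<sigma> x))"

lemma prob_ND: "\<sigma> > 0 \<Longrightarrow> prob_space (ND \<mu> \<sigma>)"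
  using prob_space_normal_density by simp

lemma G_eq:
  assumes "\<sigma> > 0" shows "G \<sigma> \<theta> y = Pm (real_of_int \<theta>) \<sigma> (y * \<sigma>\<^sup>2 / 2)"
proof -
  have "{x. private_llr \<sigma> x \<le> y} = {..y * \<sigma>\<^sup>2 / 2}"
    using assms by (auto simp: private_llr_eq field_simps)
  then show ?thesis unfolding G_def Pm_def sig_dist_def sig_density_def by simp
qed

lemma Pm_shift:
  "Pm \<mu> \<sigma> v = Pm 0 \<sigma> (v - \<mu>)"
proof -
  have "emeasure (ND \<mu> \<sigma>) {..v} = (\<integral>\<^sup>+x. ennreal (normal_density \<mu> \<sigma> x) * indicator {..v} x \<partial>lborel)"
    by (simp add: emeasure_density)
  also have "\<dots> = (\<integral>\<^sup>+x. ennreal (normal_density \<mu> \<sigma> (\<mu> + 1 * x)) * indicator {..v} (\<mu> + 1 * x) \<partial>lborel)"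
    by (subst nn_integral_real_affine[where c=1 and t=\<mu>]) auto
  also have "\<dots> = (\<integral>\<^sup>+x. ennreal (normal_density 0 \<sigma> x) * indicator {..v - \<mu>} x \<partial>lborel)"
    by (intro nn_integral_cong) (auto simp: normal_density_def indicator_def)
  also have "\<dots> = emeasure (ND 0 \<sigma>) {..v - \<mu>}"
    by (simp add: emeasure_density)
  finally show ?thesis unfolding Pm_def measure_def by simp
qed

lemma nd_mono:
  assumes "\<sigma> > 0" "\<bar>y\<bar> \<le> \<bar>z\<bar>"
  shows "normal_density 0 \<sigma> z \<le> normal_density 0 \<sigma> y"
proof -
  have "z\<^sup>2 \<ge> y\<^sup>2" using assms(2) by (metis abs_le_square_iff)
  then have "-(z)\<^sup>2/ (2 * \<sigma>\<^sup>2) \<le> -(y)\<^sup>2/ (2 * \<sigma>\<^sup>2)" using assms(1)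
    by (simp add: divide_right_mono)
  then show ?thesis unfolding normal_density_def
    by (intro mult_left_mono) auto
qed

lemma ND_Ioc_bounds:
  assumes sp: "\<sigma> > 0" and "a \<le> b" "m \<ge> 0" "\<And>y. a < y \<Longrightarrow> y \<le> b \<Longrightarrow> m \<le> normal_density \<mu> \<sigma> y"
  shows "m * (b - a) \<le> measure (ND \<mu> \<sigma>) {a<..b}"
proof -
  interpret P: prob_space "ND \<mu> \<sigma>" using sp by (rule prob_ND)
  have "ennreal (m * (b - a)) = (\<integral>\<^sup>+x. ennreal m * indicator {a<..b} x \<partial>lborel)"
    using assms by (subst nn_integral_cmult_indicator) (auto simp: ennreal_mult)
  also have "\<dots> \<le> (\<integral>\<^sup>+x. ennreal (normal_density \<mu> \<sigma> x) * indicator {a<..b} x \<partial>lborel)"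
    using assms by (intro nn_integral_mono) (auto simp: indicator_def)
  also have "\<dots> = emeasure (ND \<mu> \<sigma>) {a<..b}" by (simp add: emeasure_density)
  also have "\<dots> = ennreal (measure (ND \<mu> \<sigma>) {a<..b})" by (simp add: P.emeasure_eq_measure)
  finally show ?thesis using measure_nonneg[of "ND \<mu> \<sigma>" "{a<..b}"] by (simp add: ennreal_le_iff2) (metis order.refl)
qed

lemma ND_Ioc_upper:
  assumes sp: "\<sigma> > 0" and "a \<le> b" "m \<ge> 0" "\<And>y. a < y \<Longrightarrow> y \<le> b \<Longrightarrow> normal_density \<mu> \<sigma> y \<le> m"
  shows "measure (ND \<mu> \<sigma>) {a<..b} \<le> m * (b - a)"
proof -
  interpret P: prob_space "ND \<mu> \<sigma>" using sp by (rule prob_ND)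
  have m: "m \<ge> 0" using assms by simp
  have "ennreal (measure (ND \<mu> \<sigma>) {a<..b}) = emeasure (ND \<mu> \<sigma>) {a<..b}" by (simp add: P.emeasure_eq_measure)
  also have "\<dots> = (\<integral>\<^sup>+x. ennreal (normal_density \<mu> \<sigma> x) * indicator {a<..b} x \<partial>lborel)"
    by (simp add: emeasure_density)
  also have "\<dots> \<le> (\<integral>\<^sup>+x. ennreal m * indicator {a<..b} x \<partial>lborel)"
    using assms by (intro nn_integral_mono) (auto simp: indicator_def)
  also have "\<dots> = ennreal (m * (b - a))"
    using assms m by (subst nn_integral_cmult_indicator) (auto simp: ennreal_mult)
  finally show ?thesis using m assms(2) by (simp add: ennreal_le_iff)
qed

lemma Pm_diff:
  assumes sp: "\<sigma> > 0" and "a \<le> b" shows "Pm \<mu> \<sigma> b - Pm \<mu> \<sigma> a = measure (ND \<mu> \<sigma>) {a<..b}"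
proof -
  interpret P: prob_space "ND \<mu> \<sigma>" using sp by (rule prob_ND)
  have "{a<..b} = {..b} - {..a}" by auto
  then show ?thesis unfolding Pm_def using assms
    by (simp add: P.finite_measure_Diff)
qed

lemma Pm_compl: assumes sp: "\<sigma> > 0" shows "1 - Pm \<mu> \<sigma> v = measure (ND \<mu> \<sigma>) {v<..}"
proof -
  interpret P: prob_space "ND \<mu> \<sigma>" using sp by (rule prob_ND)
  have "{v<..} = space (ND \<mu> \<sigma>) - {..v}" by auto
  then show ?thesis unfolding Pm_def using P.prob_compl[of "{..v}"] by simp
qed

definition Phi :: "real \<Rightarrow> real \<Rightarrow> real" where "Phi \<sigma> a = Pm 0 \<sigma> a"

lemma Gp_eq: "\<sigma> > 0 \<Longrightarrow> G \<sigma> 1 (-x) = Phi \<sigma> (-x*\<sigma>\<^sup>2/2 - 1)"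
  by (simp add: G_eq Phi_def Pm_shift[of 1])

lemma Gm_eq: "\<sigma> > 0 \<Longrightarrow> G \<sigma> (-1) (-x) = Phi \<sigma> (-x*\<sigma>\<^sup>2/2 + 1)"
  by (simp add: G_eq Phi_def Pm_shift[of "-1"])

lemma Phi_diff_lower:
  assumes sp: "\<sigma> > 0" and ab: "a \<le> b" and M: "\<bar>a\<bar> \<le> M" "\<bar>b\<bar> \<le> M"
  shows "normal_density 0 \<sigma> M * (b - a) \<le> Phi \<sigma> b - Phi \<sigma> a"
  unfolding Phi_def Pm_diff[OF sp ab]
  by (rule ND_Ioc_bounds[OF sp ab]) (use M in \<open>auto intro!: nd_mono[OF sp]\<close>)

lemma Phi_diff_upper:
  assumes sp: "\<sigma> > 0" and ab: "a \<le> b" and b0: "b \<le> 0"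
  shows "Phi \<sigma> b - Phi \<sigma> a \<le> normal_density 0 \<sigma> b * (b - a)"
  unfolding Phi_def Pm_diff[OF sp ab]
  by (rule ND_Ioc_upper[OF sp ab]) (use b0 in \<open>auto intro!: nd_mono[OF sp]\<close>)

lemma Phi_mono: assumes sp: "\<sigma> > 0" and ab: "a \<le> b" shows "Phi \<sigma> a \<le> Phi \<sigma> b"
  using Phi_diff_lower[OF sp ab, of "\<bar>a\<bar> + \<bar>b\<bar>"] normal_density_nonneg[of 0 \<sigma> "\<bar>a\<bar> + \<bar>b\<bar>"] ab
  by (smt (verit) mult_nonneg_nonneg)

lemma Phi_pos: assumes sp: "\<sigma> > 0" shows "Phi \<sigma> a > 0"
proof -
  have "normal_density 0 \<sigma> (\<bar>a\<bar>+1) * (a - (a - 1)) \<le> Phi \<sigma> a - Phi \<sigma> (a - 1)"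
    by (rule Phi_diff_lower[OF sp]) auto
  moreover have "Phi \<sigma> (a - 1) \<ge> 0" unfolding Phi_def Pm_def by simp
  moreover have "normal_density 0 \<sigma> (\<bar>a\<bar>+1) > 0" using sp by (rule normal_density_pos)
  ultimately show ?thesis by simp
qed

lemma Phi_less1: assumes sp: "\<sigma> > 0" shows "Phi \<sigma> a < 1"
proof -
  interpret P: prob_space "ND 0 \<sigma>" using sp by (rule prob_ND)
  have "Phi \<sigma> (a+1) - Phi \<sigma> a \<ge> normal_density 0 \<sigma> (\<bar>a\<bar>+1) * ((a+1) - a)"
    by (rule Phi_diff_lower[OF sp]) auto
  moreover have "Phi \<sigma> (a + 1) \<le> 1" unfolding Phi_def Pm_def by simp
  moreover have "normal_density 0 \<sigma> (\<bar>a\<bar>+1) > 0" using sp by (rule normal_density_pos)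
  ultimately show ?thesis by simp
qed

lemma p_le_q:
  assumes sp: "\<sigma> > 0"
  shows "G \<sigma> 1 (-x) \<le> exp (-x) * G \<sigma> (-1) (-x)"
proof -
  interpret P: prob_space "ND (-1) \<sigma>" using sp by (rule prob_ND)
  interpret Q: prob_space "ND 1 \<sigma>" using sp by (rule prob_ND)
  define v where "v = -x*\<sigma>\<^sup>2/2"
  have key: "normal_density 1 \<sigma> y \<le> exp (-x) * normal_density (-1) \<sigma> y" if "y \<le> v" for y
  proof -
    have "normal_density 1 \<sigma> y = exp (2*y/\<sigma>\<^sup>2) * normal_density (-1) \<sigma> y"
      using sp unfolding normal_density_def
      by (simp add: exp_add[symmetric] field_simps power2_eq_square)
    also have "exp (2*y/\<sigma>\<^sup>2) \<le> exp (-x)"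
      using that sp unfolding v_def by (simp add: field_simps)
    finally show ?thesis by (simp add: mult_right_mono)
  qed
  have "ennreal (G \<sigma> 1 (-x)) = emeasure (ND 1 \<sigma>) {..v}"
    using sp by (simp add: G_eq Pm_def v_def Q.emeasure_eq_measure)
  also have "\<dots> = (\<integral>\<^sup>+y. ennreal (normal_density 1 \<sigma> y) * indicator {..v} y \<partial>lborel)"
    by (simp add: emeasure_density)
  also have "\<dots> \<le> (\<integral>\<^sup>+y. ennreal (exp (-x)) * (ennreal (normal_density (-1) \<sigma> y) * indicator {..v} y) \<partial>lborel)"
    using key by (intro nn_integral_mono) (auto simp: indicator_def ennreal_mult[symmetric])
  also have "\<dots> = ennreal (exp (-x)) * emeasure (ND (-1) \<sigma>) {..v}"
    by (simp add: emeasure_density nn_integral_cmult)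
  also have "\<dots> = ennreal (exp (-x) * G \<sigma> (-1) (-x))"
    using sp by (simp add: G_eq Pm_def v_def P.emeasure_eq_measure ennreal_mult)
  moreover have "G \<sigma> 1 (-x) \<ge> 0" "G \<sigma> (-1) (-x) \<ge> 0" unfolding G_def by auto
  ultimately show ?thesis by (simp add: ennreal_le_iff2) (smt (verit) exp_gt_zero mult_nonneg_nonneg)
qed

lemma ln_ge_1_minus_inv: "z > 0 \<Longrightarrow> 1 - 1/z \<le> ln (z::real)"
  using ln_le_minus_one[of "1/z"] by (simp add: ln_div)

lemma nd_sym: "normal_density 0 \<sigma> (-y) = normal_density 0 \<sigma> y"
  by (simp add: normal_density_def)

lemma Dp_alt: "\<sigma> > 0 \<Longrightarrow> D_plus \<sigma> x = ln ((1 - Phi \<sigma> (-x*\<sigma>\<^sup>2/2 - 1)) / (1 - Phi \<sigma> (-x*\<sigma>\<^sup>2/2 + 1)))"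
  by (simp add: D_plus_def Gp_eq Gm_eq)

lemma Dp_lower:
  assumes sp: "\<sigma> > 0"
  shows "2 * normal_density 0 \<sigma> (\<bar>x\<bar>*\<sigma>\<^sup>2/2 + 1) \<le> D_plus \<sigma> x"
proof -
  define v where "v = -x*\<sigma>\<^sup>2/2"
  define p where "p = Phi \<sigma> (v - 1)"
  define q where "q = Phi \<sigma> (v + 1)"
  have av: "\<bar>v\<bar> = \<bar>x\<bar>*\<sigma>\<^sup>2/2" unfolding v_def by (simp add: abs_mult)
  have "normal_density 0 \<sigma> (\<bar>v\<bar>+1) * ((v+1) - (v-1)) \<le> q - p"
    unfolding p_def q_def by (rule Phi_diff_lower[OF sp]) auto
  then have qp: "2 * normal_density 0 \<sigma> (\<bar>x\<bar>*\<sigma>\<^sup>2/2 + 1) \<le> q - p" by (simp add: av)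
  have p1: "0 < 1 - p" "1 - p \<le> 1" using Phi_less1[OF sp] Phi_pos[OF sp] unfolding p_def by (auto simp: less_imp_le)
  have q1: "0 < 1 - q" using Phi_less1[OF sp] unfolding q_def by auto
  have pos: "normal_density 0 \<sigma> (\<bar>x\<bar>*\<sigma>\<^sup>2/2 + 1) > 0" using sp by (rule normal_density_pos)
  have "q - p \<le> (q - p) / (1 - p)" using p1 qp pos
    by (simp add: le_divide_eq)
  also have "(q - p) / (1 - p) = 1 - 1 / ((1 - p) / (1 - q))" using p1 q1 by (simp add: field_simps)
  also have "\<dots> \<le> ln ((1 - p) / (1 - q))" using p1 q1 by (intro ln_ge_1_minus_inv) simp
  also have "\<dots> = D_plus \<sigma> x" using sp by (simp add: Dp_alt p_def q_def v_def)
  finally show ?thesis using qp by simp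
qed

lemma Dp_pos: "\<sigma> > 0 \<Longrightarrow> D_plus \<sigma> x > 0"
  using Dp_lower[of \<sigma> x] normal_density_pos[of \<sigma> 0 "\<bar>x\<bar>*\<sigma>\<^sup>2/2 + 1"] by simp

lemma Dp_upper:
  assumes sp: "\<sigma> > 0" and x: "x \<ge> 2/\<sigma>\<^sup>2"
  shows "D_plus \<sigma> x \<le> 2 * normal_density 0 \<sigma> (x*\<sigma>\<^sup>2/2 - 1) / (1 - Phi \<sigma> 0)"
proof -
  define v where "v = -x*\<sigma>\<^sup>2/2"
  define p where "p = Phi \<sigma> (v - 1)"
  define q where "q = Phi \<sigma> (v + 1)"
  have v1: "v + 1 \<le> 0" using x sp unfolding v_def by (simp add: field_simps)
  have "q - p \<le> normal_density 0 \<sigma> (v+1) * ((v+1) - (v-1))"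
    unfolding p_def q_def by (rule Phi_diff_upper[OF sp _ v1]) auto
  also have "normal_density 0 \<sigma> (v+1) = normal_density 0 \<sigma> (x*\<sigma>\<^sup>2/2 - 1)"
    using nd_sym[of \<sigma> "v+1"] unfolding v_def by (simp add: algebra_simps)
  finally have qp: "q - p \<le> 2 * normal_density 0 \<sigma> (x*\<sigma>\<^sup>2/2 - 1)" by simp
  have p1: "0 < 1 - p" using Phi_less1[OF sp] unfolding p_def by auto
  have q1: "1 - Phi \<sigma> 0 \<le> 1 - q" using Phi_mono[OF sp v1] unfolding q_def by simp
  have c0: "0 < 1 - Phi \<sigma> 0" using Phi_less1[OF sp] by simp
  have pq: "p \<le> q" unfolding p_def q_def by (rule Phi_mono[OF sp]) simp
  have "D_plus \<sigma> x = ln ((1 - p) / (1 - q))" using sp by (simp add: Dp_alt p_def q_def v_def)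
  also have "\<dots> \<le> (1 - p) / (1 - q) - 1" using p1 q1 c0 by (intro ln_le_minus_one) simp
  also have "\<dots> = (q - p) / (1 - q)" using q1 c0 by (simp add: field_simps)
  also have "\<dots> \<le> (q - p) / (1 - Phi \<sigma> 0)" using q1 c0 pq by (intro divide_left_mono) auto
  also have "\<dots> \<le> 2 * normal_density 0 \<sigma> (x*\<sigma>\<^sup>2/2 - 1) / (1 - Phi \<sigma> 0)"
    using qp c0 by (intro divide_right_mono) auto
  finally show ?thesis .
qed



lemma poly_eventually:
  fixes d :: real assumes "d > 0" shows "eventually (\<lambda>z. d*z^2 - \<beta>*z - \<gamma> \<ge> 0) at_top"
proof -
  have "filterlim (\<lambda>z::real. d*z^2 - \<beta>*z - \<gamma>) at_top at_top"
    using assms by real_asymp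
  from this[unfolded filterlim_at_top] show ?thesis by blast
qed

lemma Dp_lower_ev:
  assumes sp: "\<sigma> > 0" and a: "a > \<sigma>\<^sup>2/8"
  shows "eventually (\<lambda>z. exp (-a*z^2) \<le> D_plus \<sigma> z) at_top"
proof -
  define C where "C = 2 / sqrt (2 * pi * \<sigma>\<^sup>2)"
  have C: "C > 0" using sp unfolding C_def by simp
  have ev: "eventually (\<lambda>z. (a - \<sigma>\<^sup>2/8)*z^2 - (1/2)*z - (1/(2*\<sigma>\<^sup>2) - ln C) \<ge> 0) at_top"
    using poly_eventually[of "a - \<sigma>\<^sup>2/8" "1/2" "1/(2*\<sigma>\<^sup>2) - ln C"] a by simp
  moreover have "eventually (\<lambda>z::real. z \<ge> 0) at_top" by (rule eventually_ge_at_top)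
  ultimately show ?thesis
  proof eventually_elim
    case (elim z)
    have "-a*z^2 \<le> ln C - (z*\<sigma>\<^sup>2/2 + 1)\<^sup>2 / (2*\<sigma>\<^sup>2)"
      using elim sp by (simp add: field_simps power2_eq_square)
    then have "exp (-a*z^2) \<le> exp (ln C - (z*\<sigma>\<^sup>2/2 + 1)\<^sup>2 / (2*\<sigma>\<^sup>2))" by simp
    also have "\<dots> = 2 * normal_density 0 \<sigma> (\<bar>z\<bar>*\<sigma>\<^sup>2/2 + 1)"
      using C elim unfolding normal_density_def C_def by (simp add: exp_diff exp_minus field_simps)
    also have "\<dots> \<le> D_plus \<sigma> z" by (rule Dp_lower[OF sp])
    finally show ?case .
  qed
qed

lemma Dp_upper_ev:
  assumes sp: "\<sigma> > 0" and b: "b < \<sigma>\<^sup>2/8"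
  shows "eventually (\<lambda>z. D_plus \<sigma> z \<le> exp (-b*z^2)) at_top"
proof -
  define c0 where "c0 = 1 - Phi \<sigma> 0"
  have c0: "c0 > 0" using Phi_less1[OF sp] unfolding c0_def by simp
  define C where "C = 2 / sqrt (2 * pi * \<sigma>\<^sup>2) / c0"
  have C: "C > 0" using sp c0 unfolding C_def by simp
  have ev: "eventually (\<lambda>z. (\<sigma>\<^sup>2/8 - b)*z^2 - (1/2)*z - (ln C - 1/(2*\<sigma>\<^sup>2)) \<ge> 0) at_top"
    using poly_eventually[of "\<sigma>\<^sup>2/8 - b" "1/2" "ln C - 1/(2*\<sigma>\<^sup>2)"] b by simp
  moreover have "eventually (\<lambda>z::real. z \<ge> 2/\<sigma>\<^sup>2) at_top" by (rule eventually_ge_at_top)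
  ultimately show ?thesis
  proof eventually_elim
    case (elim z)
    have "D_plus \<sigma> z \<le> 2 * normal_density 0 \<sigma> (z*\<sigma>\<^sup>2/2 - 1) / c0"
      unfolding c0_def by (rule Dp_upper[OF sp elim(2)])
    also have "\<dots> = exp (ln C - (z*\<sigma>\<^sup>2/2 - 1)\<^sup>2 / (2*\<sigma>\<^sup>2))"
      using C c0 unfolding normal_density_def C_def by (simp add: exp_diff exp_minus field_simps)
    also have "ln C - (z*\<sigma>\<^sup>2/2 - 1)\<^sup>2 / (2*\<sigma>\<^sup>2) \<le> -b*z^2"
      using elim sp by (simp add: field_simps power2_eq_square)
    then have "exp (ln C - (z*\<sigma>\<^sup>2/2 - 1)\<^sup>2 / (2*\<sigma>\<^sup>2)) \<le> exp (-b*z^2)" by simp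
    finally show ?case .
  qed
qed

lemma det_mono:
  assumes sp: "\<sigma> > 0" and rec: "\<And>n. n \<ge> T \<Longrightarrow> x (Suc n) = x n + D_plus \<sigma> (x n)"
  shows "T \<le> m \<Longrightarrow> m \<le> n \<Longrightarrow> x m \<le> x n"
proof (induction n rule: nat_induct)
  case 0 then show ?case by simp
next
  case (Suc n)
  show ?case
  proof (cases "m = Suc n")
    case False
    then have "x m \<le> x n" using Suc by simp
    also have "x n \<le> x (Suc n)" using rec[of n] Dp_pos[OF sp, of "x n"] Suc False by simp
    finally show ?thesis .
  qed simp
qed

lemma det_to_infty:
  assumes sp: "\<sigma> > 0" and rec: "\<And>n. n \<ge> T \<Longrightarrow> x (Suc n) = x n + D_plus \<sigma> (x n)"
  shows "filterlim x at_top sequentially"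
  unfolding filterlim_at_top
proof
  fix B :: real
  show "eventually (\<lambda>n. B \<le> x n) sequentially"
  proof (cases "\<exists>n\<ge>T. B \<le> x n")
    case True
    then obtain n0 where n0: "n0 \<ge> T" "B \<le> x n0" by auto
    show ?thesis unfolding eventually_sequentially
      using n0 det_mono[where \<sigma>=\<sigma> and T=T and x=x, OF sp rec, of n0] by (meson order_trans)
  next
    case False
    then have lt: "\<And>n. n \<ge> T \<Longrightarrow> x n < B" by (meson not_le)
    define R where "R = \<bar>x T\<bar> + \<bar>B\<bar>"
    define \<delta> where "\<delta> = 2 * normal_density 0 \<sigma> (R*\<sigma>\<^sup>2/2 + 1)"
    have \<delta>: "\<delta> > 0" unfolding \<delta>_def using normal_density_pos[OF sp] by simp
    have step: "x (Suc n) \<ge> x n + \<delta>" if "n \<ge> T" for n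
    proof -
      have "\<bar>x n\<bar> \<le> R" using det_mono[where \<sigma>=\<sigma> and T=T and x=x, OF sp rec, of T n] lt[OF that] that unfolding R_def by auto
      then have "\<bar>x n\<bar>*\<sigma>\<^sup>2/2 + 1 \<le> R*\<sigma>\<^sup>2/2 + 1" using sp by (simp add: mult_right_mono)
      then have "normal_density 0 \<sigma> (R*\<sigma>\<^sup>2/2 + 1) \<le> normal_density 0 \<sigma> (\<bar>x n\<bar>*\<sigma>\<^sup>2/2 + 1)"
        using sp by (intro nd_mono) auto
      then have "\<delta> \<le> D_plus \<sigma> (x n)" using Dp_lower[OF sp, of "x n"] unfolding \<delta>_def by simp
      then show ?thesis using rec[OF that] by simp
    qed
    have lin: "x (T + k) \<ge> x T + real k * \<delta>" for k
    proof (induction k)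
      case (Suc k)
      then show ?case using step[of "T + k"] by (simp add: algebra_simps)
    qed simp
    obtain k where k: "B - x T < real k * \<delta>" using ex_less_of_nat_mult[OF \<delta>] by blast
    have "x (T + k) < B" using lt by simp
    then show ?thesis using lin[of k] k by simp
  qed
qed

lemma ln_ratio_lim1: "((\<lambda>n::nat. ln (real n - real N) / ln (real n)) \<longlongrightarrow> 1) at_top"
  by real_asymp

lemma ln_ratio_lim2: "((\<lambda>n::nat. ln (C + real n) / ln (real n)) \<longlongrightarrow> 1) at_top"
  by real_asymp

lemma det_lower_pos:
  assumes sp: "\<sigma> > 0" and rec: "\<And>n. n \<ge> T \<Longrightarrow> x (Suc n) = x n + D_plus \<sigma> (x n)"
    and L: "0 < L" "L < 8/\<sigma>\<^sup>2"
  shows "eventually (\<lambda>n. L < (x n)\<^sup>2 / ln (real n)) sequentially"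
proof -
  have lim: "filterlim x at_top sequentially" by (rule det_to_infty[where \<sigma>=\<sigma> and T=T and x=x, OF sp rec])
  define a' where "a' = (\<sigma>\<^sup>2/8 + 1/L)/2"
  define a where "a = (\<sigma>\<^sup>2/8 + a')/2"
  have Linv: "\<sigma>\<^sup>2/8 < 1/L" using L sp by (simp add: field_simps)
  have a'1: "L < 1/a'"
  proof -
    have Ls: "L*\<sigma>\<^sup>2 < 8" using L sp by (simp add: field_simps)
    have p: "8 + L*\<sigma>\<^sup>2 > 0" using L by (simp add: add_pos_nonneg)
    have "L*(8+L*\<sigma>\<^sup>2) < L*16" using Ls L by (intro mult_strict_left_mono) auto
    then have "L < L*16/(8+L*\<sigma>\<^sup>2)" using p by (simp add: less_divide_eq)
    then show ?thesis using L unfolding a'_def by (simp add: field_simps)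
  qed
  have gen: "u < w \<Longrightarrow> u < (u + (u + w)/2)/2 \<and> (u + (u + w)/2)/2 < (u+w)/2" for u w :: real
    by (auto simp: field_simps)
  have aa1: "\<sigma>\<^sup>2/8 < a" using gen[OF Linv] unfolding a_def a'_def by blast
  have aa2: "a < a'" using gen[OF Linv] unfolding a_def a'_def by blast
  note aa = aa1 aa2
  have a0: "a > 0" using aa sp by (smt (verit) zero_less_power divide_pos_pos)
  have ev1: "eventually (\<lambda>n. exp (-a*(x n)^2) \<le> D_plus \<sigma> (x n)) sequentially"
    using Dp_lower_ev[OF sp aa(1)] lim unfolding filterlim_iff by blast
  have ev2: "eventually (\<lambda>n. x n \<ge> 1/(a'-a)) sequentially"
    using lim by (simp add: filterlim_at_top)
  have ev3: "eventually (\<lambda>n. x n \<ge> 0) sequentially"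
    using lim by (simp add: filterlim_at_top)
  obtain N1 where N1: "\<And>n. n \<ge> N1 \<Longrightarrow> exp (-a*(x n)^2) \<le> D_plus \<sigma> (x n) \<and> x n \<ge> 1/(a'-a) \<and> x n \<ge> 0 \<and> n \<ge> T"
    using eventually_conj[OF ev1 eventually_conj[OF ev2 eventually_conj[OF ev3 eventually_ge_at_top[of T]]]]
    unfolding eventually_sequentially by blast
  define \<psi> where "\<psi> z = z * exp (a * z\<^sup>2)" for z
  have stepk: "\<psi> (x (Suc n)) \<ge> \<psi> (x n) + 1" if "n \<ge> N1" for n
  proof -
    define z where "z = x n"
    define d where "d = D_plus \<sigma> z"
    have z0: "z \<ge> 0" and dlow: "exp (-a*z^2) \<le> d" using N1[OF that] unfolding z_def d_def by auto
    have d0: "d > 0" unfolding d_def by (rule Dp_pos[OF sp])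
    have xs: "x (Suc n) = z + d" using rec[of n] N1[OF that] unfolding z_def d_def by simp
    have "exp (a*z\<^sup>2) \<le> exp (a*(z+d)\<^sup>2)" using z0 d0 a0
      by (simp add: power_mono mult_left_mono)
    then have "(z+d) * exp (a*z\<^sup>2) \<le> (z+d) * exp (a*(z+d)\<^sup>2)" using z0 d0 by (intro mult_left_mono) auto
    moreover have "1 \<le> d * exp (a*z\<^sup>2)"
    proof -
      have "1 = exp (-a*z^2) * exp (a*z\<^sup>2)" by (simp add: exp_minus field_simps)
      also have "\<dots> \<le> d * exp (a*z\<^sup>2)" using dlow by (intro mult_right_mono) auto
      finally show ?thesis .
    qed
    ultimately show ?thesis unfolding \<psi>_def xs z_def[symmetric] by (simp add: algebra_simps)
  qed
  have growth: "\<psi> (x (N1 + k)) \<ge> real k" for k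
  proof (induction k)
    case 0 then show ?case using N1[of N1] unfolding \<psi>_def by simp
  next
    case (Suc k) then show ?case using stepk[of "N1 + k"] by simp
  qed
  have bound: "a' * (x n)\<^sup>2 \<ge> ln (real n - real N1)" if "n > N1" for n
  proof -
    define z where "z = x n"
    have z: "z \<ge> 0" "z \<ge> 1/(a'-a)" using N1[of n] that unfolding z_def by auto
    have "1 \<le> (a'-a) * z" using z aa by (simp add: field_simps)
    then have "z * 1 \<le> z * ((a'-a) * z)" using z by (intro mult_left_mono) auto
    then have "z \<le> (a'-a) * z\<^sup>2" by (simp add: power2_eq_square algebra_simps)
    also have "\<dots> \<le> exp ((a'-a) * z\<^sup>2)" by (smt (verit) exp_ge_add_one_self)
    finally have "\<psi> z \<le> exp ((a'-a) * z\<^sup>2) * exp (a * z\<^sup>2)" unfolding \<psi>_def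
      by (intro mult_right_mono) auto
    also have "\<dots> = exp (a' * z\<^sup>2)" by (simp add: exp_add[symmetric] algebra_simps)
    finally have "\<psi> z \<le> exp (a' * z\<^sup>2)" .
    moreover have "real n - real N1 \<le> \<psi> z" using growth[of "n - N1"] that unfolding z_def by simp
    ultimately have "real n - real N1 \<le> exp (a' * z\<^sup>2)" by linarith
    then have "ln (real n - real N1) \<le> ln (exp (a' * z\<^sup>2))" using that by (intro ln_mono) auto
    then show ?thesis unfolding z_def by simp
  qed
  have "((\<lambda>n. ln (real n - real N1) / ln (real n) * (1/a')) \<longlongrightarrow> 1 * (1/a')) sequentially"
    by (intro tendsto_intros ln_ratio_lim1)
  then have ev4: "eventually (\<lambda>n. L < ln (real n - real N1) / ln (real n) * (1/a')) sequentially"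
    using a'1 by (auto dest: order_tendstoD)
  show ?thesis
    using ev4 eventually_gt_at_top[of N1] eventually_gt_at_top[of 1]
  proof eventually_elim
    case (elim n)
    have lnpos: "ln (real n) > 0" using elim by simp
    have a'0: "a' > 0" using aa a0 by simp
    have "ln (real n - real N1) / ln (real n) * (1/a') \<le> (x n)\<^sup>2 / ln (real n)"
      using bound[OF elim(2)] lnpos a'0 by (simp add: field_simps)
    then show ?case using elim(1) by simp
  qed
qed

lemma lim_aux: "b > 0 \<Longrightarrow> d > 0 \<Longrightarrow> ((\<lambda>z::real. b*(2*z+1)*exp(-d*z^2)) \<longlongrightarrow> 0) at_top"
  by real_asymp

lemma det_upper:
  assumes sp: "\<sigma> > 0" and rec: "\<And>n. n \<ge> T \<Longrightarrow> x (Suc n) = x n + D_plus \<sigma> (x n)"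
    and U: "U > 8/\<sigma>\<^sup>2"
  shows "eventually (\<lambda>n. (x n)\<^sup>2 / ln (real n) < U) sequentially"
proof -
  have lim: "filterlim x at_top sequentially"
    by (rule det_to_infty[where \<sigma>=\<sigma> and T=T and x=x, OF sp rec])
  have U0: "U > 0" using U sp by (smt (verit) zero_less_power divide_pos_pos)
  have Uinv: "1/U < \<sigma>\<^sup>2/8" using U U0 sp by (simp add: field_simps)
  define b where "b = (1/U + \<sigma>\<^sup>2/8)/2"
  define b' where "b' = (b + \<sigma>\<^sup>2/8)/2"
  have gen: "u < w \<Longrightarrow> u < (u+w)/2 \<and> (u+w)/2 < ((u+w)/2 + w)/2 \<and> ((u+w)/2 + w)/2 < w" for u w :: real
    by (auto simp: field_simps)
  have bb: "1/U < b" "b < b'" "b' < \<sigma>\<^sup>2/8" using gen[OF Uinv] unfolding b'_def b_def by blast+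
  have b0: "b > 0" using bb U0 by (smt (verit) divide_pos_pos)
  have b'0: "b' > 0" using bb b0 by simp
  have Ub: "1/b < U" using bb(1) U0 b0 by (simp add: field_simps)
  have ev1: "eventually (\<lambda>n. D_plus \<sigma> (x n) \<le> exp (-b'*(x n)^2)) sequentially"
    using Dp_upper_ev[OF sp bb(3)] lim unfolding filterlim_iff by blast
  have E1: "eventually (\<lambda>z. b*(2*z+1)*exp(-b'*z^2) < 1/2) at_top"
    using order_tendstoD(2)[OF lim_aux[OF b0 b'0], of "1/2"] by simp
  have E2: "eventually (\<lambda>z. (2*b)*(2*z+1)*exp(-(b'-b)*z^2) < 1) at_top"
    using order_tendstoD(2)[OF lim_aux[of "2*b" "b'-b"], of 1] b0 bb by simp
  have ev2: "eventually (\<lambda>n. b*(2*x n+1)*exp(-b'*(x n)^2) < 1/2) sequentially"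
    using E1 lim unfolding filterlim_iff by blast
  have ev3: "eventually (\<lambda>n. (2*b)*(2*x n+1)*exp(-(b'-b)*(x n)^2) < 1) sequentially"
    using E2 lim unfolding filterlim_iff by blast
  have ev4: "eventually (\<lambda>n. x n \<ge> 0) sequentially"
    using lim by (simp add: filterlim_at_top)
  obtain N2 where N2: "\<And>n. n \<ge> N2 \<Longrightarrow> D_plus \<sigma> (x n) \<le> exp (-b'*(x n)^2) \<and>
      b*(2*x n+1)*exp(-b'*(x n)^2) < 1/2 \<and> (2*b)*(2*x n+1)*exp(-(b'-b)*(x n)^2) < 1 \<and> x n \<ge> 0 \<and> n \<ge> T"
    using eventually_conj[OF ev1 eventually_conj[OF ev2 eventually_conj[OF ev3 eventually_conj[OF ev4 eventually_ge_at_top[of T]]]]]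
    unfolding eventually_sequentially by blast
  have step: "exp (b*(x (Suc n))\<^sup>2) \<le> exp (b*(x n)\<^sup>2) + 1" if "n \<ge> N2" for n
  proof -
    define z where "z = x n"
    define d where "d = D_plus \<sigma> z"
    note h = N2[OF that, folded z_def]
    have z0: "z \<ge> 0" using h by simp
    have dup: "d \<le> exp (-b'*z^2)" using h unfolding d_def by simp
    have d0: "d > 0" unfolding d_def by (rule Dp_pos[OF sp])
    have e1: "exp (-b'*z^2) \<le> 1" using b'0 by simp
    have xs: "x (Suc n) = z + d" using rec[of n] h unfolding z_def d_def by simp
    define w where "w = b * (2*z*d + d^2)"
    have w0: "w \<ge> 0" unfolding w_def using b0 z0 d0 by simp
    have d1: "d \<le> 1" using dup e1 by linarith
    have "d*d \<le> 1*d" using d1 d0 by (intro mult_right_mono) auto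
    then have "2*z*d + d^2 \<le> (2*z+1)*d" by (simp add: power2_eq_square algebra_simps)
    also have "\<dots> \<le> (2*z+1)*exp (-b'*z^2)" using z0 dup by (intro mult_left_mono) auto
    finally have wle: "w \<le> b*(2*z+1)*exp (-b'*z^2)" unfolding w_def using b0 by (simp add: mult_left_mono)
    have wh: "w \<le> 1/2" using wle h by simp
    have "b*(z+d)\<^sup>2 = b*z\<^sup>2 + w" unfolding w_def by (simp add: power2_eq_square algebra_simps)
    then have "exp (b*(x (Suc n))\<^sup>2) = exp (b*z\<^sup>2) * exp w" unfolding xs by (simp add: exp_add)
    also have "\<dots> \<le> exp (b*z\<^sup>2) * (1 + 2*w)" using real_exp_bound_lemma[OF w0 wh] by simp
    also have "\<dots> = exp (b*z\<^sup>2) + 2*w*exp (b*z\<^sup>2)" by (simp add: algebra_simps)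
    also have "2*w*exp (b*z\<^sup>2) \<le> 2*(b*(2*z+1)*exp (-b'*z^2))*exp (b*z\<^sup>2)"
      using wle by simp
    also have "\<dots> = (2*b)*(2*z+1)*exp(-(b'-b)*z^2)"
      by (simp add: exp_add[symmetric] algebra_simps)
    also have "\<dots> \<le> 1" using h by simp
    finally show ?thesis unfolding z_def by simp
  qed
  define C where "C = exp (b*(x N2)\<^sup>2)"
  have growth: "exp (b*(x (N2 + k))\<^sup>2) \<le> C + real k" for k
  proof (induction k)
    case 0 then show ?case unfolding C_def by simp
  next
    case (Suc k) then show ?case using step[of "N2 + k"] by simp
  qed
  have bound: "b * (x n)\<^sup>2 \<le> ln (C + real n)" if "n \<ge> N2" for n
  proof -
    have "exp (b*(x n)\<^sup>2) \<le> C + real (n - N2)" using growth[of "n - N2"] that by simp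
    also have "\<dots> \<le> C + real n" by simp
    finally have "exp (b*(x n)\<^sup>2) \<le> C + real n" .
    then have "ln (exp (b*(x n)\<^sup>2)) \<le> ln (C + real n)" by (intro ln_mono) auto
    then show ?thesis by simp
  qed
  have "((\<lambda>n. ln (C + real n) / ln (real n) * (1/b)) \<longlongrightarrow> 1 * (1/b)) sequentially"
    by (intro tendsto_intros ln_ratio_lim2)
  then have ev5: "eventually (\<lambda>n. ln (C + real n) / ln (real n) * (1/b) < U) sequentially"
    using Ub by (auto dest: order_tendstoD)
  show ?thesis
    using ev5 eventually_ge_at_top[of N2] eventually_gt_at_top[of 1]
  proof eventually_elim
    case (elim n)
    have lnpos: "ln (real n) > 0" using elim by simp
    have "(x n)\<^sup>2 / ln (real n) \<le> ln (C + real n) / ln (real n) * (1/b)"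
      using bound[OF elim(2)] lnpos b0 by (simp add: field_simps)
    then show ?case using elim(1) by simp
  qed
qed

lemma det_sq_lim:
  assumes sp: "\<sigma> > 0" and rec: "\<And>n. n \<ge> T \<Longrightarrow> x (Suc n) = x n + D_plus \<sigma> (x n)"
  shows "(\<lambda>n. (x n)\<^sup>2 / ln (real n)) \<longlonglongrightarrow> 8/\<sigma>\<^sup>2"
proof (rule order_tendstoI)
  fix L assume L: "L < 8/\<sigma>\<^sup>2"
  show "eventually (\<lambda>n. L < (x n)\<^sup>2 / ln (real n)) sequentially"
  proof (cases "L > 0")
    case True show ?thesis using sp rec True L by (rule det_lower_pos[where \<sigma>=\<sigma> and T=T and x=x])
  next
    case False
    have "eventually (\<lambda>n. 4/\<sigma>\<^sup>2 < (x n)\<^sup>2 / ln (real n)) sequentially"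
    proof -
      have "0 < 4/\<sigma>\<^sup>2" "4/\<sigma>\<^sup>2 < 8/\<sigma>\<^sup>2" using sp by (auto simp: divide_strict_right_mono)
      then show ?thesis using sp rec by (intro det_lower_pos[where \<sigma>=\<sigma> and T=T and x=x])
    qed
    moreover have "L < 4/\<sigma>\<^sup>2" using False sp by (smt (verit) zero_less_power divide_pos_pos)
    ultimately show ?thesis by (auto elim: eventually_mono)
  qed
next
  fix U assume "U > 8/\<sigma>\<^sup>2"
  then show "eventually (\<lambda>n. (x n)\<^sup>2 / ln (real n) < U) sequentially"
    using det_upper[where \<sigma>=\<sigma> and T=T and x=x, OF sp rec] by blast
qed

lemma det_lim:
  assumes sp: "\<sigma> > 0" and rec: "\<And>n. n \<ge> T \<Longrightarrow> x (Suc n) = x n + D_plus \<sigma> (x n)"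
  shows "(\<lambda>n. x n / sqrt (ln (real n))) \<longlonglongrightarrow> 2 * sqrt 2 / \<sigma>"
proof -
  have lim: "filterlim x at_top sequentially"
    by (rule det_to_infty[where \<sigma>=\<sigma> and T=T and x=x, OF sp rec])
  have "(\<lambda>n. sqrt ((x n)\<^sup>2 / ln (real n))) \<longlonglongrightarrow> sqrt (8/\<sigma>\<^sup>2)"
    by (intro tendsto_intros det_sq_lim[where \<sigma>=\<sigma> and T=T and x=x, OF sp rec])
  also have "sqrt (8/\<sigma>\<^sup>2) = 2 * sqrt 2 / \<sigma>"
  proof -
    have "sqrt (8/\<sigma>\<^sup>2) = sqrt 8 / sqrt (\<sigma>\<^sup>2)" by (simp add: real_sqrt_divide)
    also have "sqrt 8 = 2 * sqrt 2"
    proof -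
      have "sqrt 8 = sqrt (2^2 * 2)" by simp
      also have "\<dots> = 2 * sqrt 2" by (simp only: real_sqrt_mult) simp
      finally show ?thesis .
    qed
    also have "sqrt (\<sigma>\<^sup>2) = \<sigma>" using sp by simp
    finally show ?thesis .
  qed
  finally have *: "(\<lambda>n. sqrt ((x n)\<^sup>2 / ln (real n))) \<longlonglongrightarrow> 2 * sqrt 2 / \<sigma>" .
  have "eventually (\<lambda>n. x n \<ge> 0) sequentially" using lim by (simp add: filterlim_at_top)
  then have "eventually (\<lambda>n. sqrt ((x n)\<^sup>2 / ln (real n)) = x n / sqrt (ln (real n))) sequentially"
    by (rule eventually_mono) (simp add: real_sqrt_divide)
  from tendsto_cong[OF this] * show ?thesis by simp
qed

lemma sqrt_ln_ratio: "((\<lambda>t::nat. sqrt (ln (real t - 1)) / sqrt (ln (real t))) \<longlongrightarrow> 1) at_top"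
  by real_asymp

lemma det_final:
  assumes sp: "\<sigma> > 0" and rec: "\<And>n. n \<ge> T \<Longrightarrow> x (Suc n) = x n + D_plus \<sigma> (x n)"
  shows "(\<lambda>t. x (t - 1) / ((2 * sqrt 2 / \<sigma>) * sqrt (ln (real t)))) \<longlonglongrightarrow> 1"
proof -
  define k where "k = 2 * sqrt 2 / \<sigma>"
  have k0: "k \<noteq> 0" using sp unfolding k_def by simp
  have f: "(\<lambda>n. x n / sqrt (ln (real n))) \<longlonglongrightarrow> k"
    unfolding k_def by (rule det_lim[where \<sigma>=\<sigma> and T=T and x=x, OF sp rec])
  have g: "(\<lambda>t. x (t - 1) / sqrt (ln (real (t - 1)))) \<longlonglongrightarrow> k"
  proof (rule LIMSEQ_imp_Suc)
    have e: "(\<lambda>n. x (Suc n - 1) / sqrt (ln (real (Suc n - 1)))) = (\<lambda>n. x n / sqrt (ln (real n)))"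
      by (rule ext) (simp only: diff_Suc_1)
    show "(\<lambda>n. x (Suc n - 1) / sqrt (ln (real (Suc n - 1)))) \<longlonglongrightarrow> k" unfolding e by (rule f)
  qed
  have "(\<lambda>t. x (t - 1) / sqrt (ln (real (t - 1))) * (sqrt (ln (real t - 1)) / sqrt (ln (real t))) / k)
        \<longlonglongrightarrow> k * 1 / k"
    by (intro tendsto_intros g sqrt_ln_ratio k0)
  moreover have "eventually (\<lambda>t. x (t - 1) / sqrt (ln (real (t - 1))) * (sqrt (ln (real t - 1)) / sqrt (ln (real t))) / k
      = x (t - 1) / ((2 * sqrt 2 / \<sigma>) * sqrt (ln (real t)))) sequentially"
    using eventually_gt_at_top[of 2]
  proof eventually_elim
    case (elim t)
    have "real (t - 1) = real t - 1" using elim by simp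
    moreover have "ln (real t - 1) > 0" using elim by simp
    moreover have "\<And>a s r k::real. s \<noteq> 0 \<Longrightarrow> a / s * (s / r) / k = a / (k * r)" by (simp add: field_simps)
    ultimately show ?case unfolding k_def by simp
  qed
  moreover have "k * 1 / k = 1" using k0 by simp
  ultimately show ?thesis using tendsto_cong by fastforce
qed



definition vth :: "real \<Rightarrow> real \<Rightarrow> real" where "vth \<sigma> x = -x*\<sigma>\<^sup>2/2"

lemma Dm_alt: "\<sigma> > 0 \<Longrightarrow> D_minus \<sigma> x = ln (Phi \<sigma> (-x*\<sigma>\<^sup>2/2 - 1) / Phi \<sigma> (-x*\<sigma>\<^sup>2/2 + 1))"
  by (simp add: D_minus_def Gp_eq Gm_eq)

lemma Fm_eq:
  assumes sp: "\<sigma> > 0"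
  shows "llr_update \<sigma> l (action \<sigma> l y) = (if vth \<sigma> l < y then l + D_plus \<sigma> l else l + D_minus \<sigma> l)"
proof -
  have "(l + 2*y/\<sigma>\<^sup>2 > 0) = (vth \<sigma> l < y)" using sp unfolding vth_def
    by (simp add: field_simps) linarith
  then show ?thesis unfolding llr_update_def action_def using sp by (simp add: private_llr_eq)
qed

lemma Phi_meas[measurable]: "\<sigma> > 0 \<Longrightarrow> Phi \<sigma> \<in> borel_measurable borel"
  by (rule borel_measurable_mono) (auto simp: mono_def intro: Phi_mono)

lemma Dp_meas[measurable]: assumes sp: "\<sigma> > 0" shows "D_plus \<sigma> \<in> borel_measurable borel"
proof -
  have "D_plus \<sigma> = (\<lambda>x. ln ((1 - Phi \<sigma> (-x*\<sigma>\<^sup>2/2 - 1)) / (1 - Phi \<sigma> (-x*\<sigma>\<^sup>2/2 + 1))))"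
    using sp by (simp add: Dp_alt fun_eq_iff)
  also have "\<dots> \<in> borel_measurable borel" using sp by measurable
  finally show ?thesis .
qed

lemma Dm_meas[measurable]: assumes sp: "\<sigma> > 0" shows "D_minus \<sigma> \<in> borel_measurable borel"
proof -
  have "D_minus \<sigma> = (\<lambda>x. ln (Phi \<sigma> (-x*\<sigma>\<^sup>2/2 - 1) / Phi \<sigma> (-x*\<sigma>\<^sup>2/2 + 1)))"
    using sp by (simp add: Dm_alt fun_eq_iff)
  also have "\<dots> \<in> borel_measurable borel" using sp by measurable
  finally show ?thesis .
qed

lemma ell_aux_cong: "(\<And>k. k < m \<Longrightarrow> f k = g k) \<Longrightarrow> ell_aux \<sigma> f m = ell_aux \<sigma> g m"
  by (induction m) auto

lemma ell_aux_meas_Pi: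
  assumes sp: "\<sigma> > 0" and "m \<le> n"
  shows "(\<lambda>f. ell_aux \<sigma> f m) \<in> borel_measurable (PiM {..<n} (\<lambda>_. borel))"
  using assms(2)
proof (induction m)
  case 0 then show ?case by simp
next
  case (Suc m)
  have IH: "(\<lambda>f. ell_aux \<sigma> f m) \<in> borel_measurable (PiM {..<n} (\<lambda>_. borel))" using Suc by simp
  have c: "(\<lambda>f. f m) \<in> borel_measurable (PiM {..<n} (\<lambda>_. borel))"
    using Suc by (intro measurable_component_singleton) auto
  have "(\<lambda>f. ell_aux \<sigma> f (Suc m)) = (\<lambda>f. if vth \<sigma> (ell_aux \<sigma> f m) < f m then ell_aux \<sigma> f m + D_plus \<sigma> (ell_aux \<sigma> f m)
      else ell_aux \<sigma> f m + D_minus \<sigma> (ell_aux \<sigma> f m))"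
    using sp by (simp add: Fm_eq fun_eq_iff)
  also have "\<dots> \<in> borel_measurable (PiM {..<n} (\<lambda>_. borel))"
    unfolding vth_def using IH c sp by measurable
  finally show ?case .
qed

lemma lin1: fixes q U W :: real shows "q/9 \<le> U \<Longrightarrow> 0 \<le> W \<Longrightarrow> q/18 \<le> (U+W)/2"
  by (simp add: field_simps)
lemma lin2: fixes q U W :: real shows "q \<le> W \<Longrightarrow> 0 \<le> U \<Longrightarrow> q/2 \<le> (U+W)/2"
  by (simp add: field_simps)

lemma H_real:
  fixes p q x c \<delta> :: real
  assumes p: "0 < p" "p < q" "q < 1" and c: "c \<le> 1/18" "c \<le> \<delta>\<^sup>2/4" "c \<ge> 0" and d: "\<delta> \<ge> 0"
    and cases: "(1 \<le> x \<and> p \<le> exp (-x) * q) \<or> (x \<le> 1 \<and> 2*\<delta> \<le> q - p)"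
  shows "exp (-x/2) * (sqrt ((1-p)*(1-q)) + sqrt (p*q)) + c*p \<le> exp (-x/2)"
proof -
  define a where "a = sqrt p"
  define b where "b = sqrt q"
  define a' where "a' = sqrt (1-p)"
  define b' where "b' = sqrt (1-q)"
  have pb: "0 \<le> p" "0 \<le> q" "p \<le> 1" "q \<le> 1" using p by linarith+
  have sq: "a^2 = p" "b^2 = q" "a'^2 = 1-p" "b'^2 = 1-q" unfolding a_def b_def a'_def b'_def using pb by auto
  have nn: "a \<ge> 0" "b \<ge> 0" "a' \<ge> 0" "b' \<ge> 0" unfolding a_def b_def a'_def b'_def using pb by auto
  have prod: "sqrt ((1-p)*(1-q)) = a'*b'" "sqrt (p*q) = a*b" unfolding a_def b_def a'_def b'_def
    by (simp_all add: real_sqrt_mult)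
  have i1: "(a-b)^2 = p - 2*(a*b) + q" using sq by (simp add: power2_diff)
  have i2: "(a'-b')^2 = (1-p) - 2*(a'*b') + (1-q)" using sq by (simp add: power2_diff)
  have ident: "1 - (a'*b' + a*b) = ((a-b)^2 + (a'-b')^2)/2"
    unfolding i1 i2 by simp
  have e12: "exp (1/2::real) \<ge> 3/2" using exp_ge_add_one_self[of "1/2::real"] by simp
  have E: "exp (-x/2) > 0" by simp
  have key: "c * p \<le> exp (-x/2) * (1 - (a'*b' + a*b))"
    using cases
  proof
    assume h: "1 \<le> x \<and> p \<le> exp (-x) * q"
    have "a \<le> sqrt (exp (-x) * q)" unfolding a_def using h by (intro real_sqrt_le_mono) simp
    also have "sqrt (exp (-x) * q) = exp (-x/2) * b"
    proof -
      have "sqrt (exp (-x)) = exp (-x/2)"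
        by (rule real_sqrt_unique) (simp_all add: power2_eq_square exp_add[symmetric])
      then show ?thesis by (simp add: real_sqrt_mult b_def)
    qed
    finally have ab: "a \<le> exp (-x/2) * b" .
    have "exp (-x/2) \<le> exp (-1/2::real)" using h by simp
    also have "exp (-1/2::real) = 1 / exp (1/2)" by (simp add: exp_minus field_simps)
    also have "\<dots> \<le> 2/3" using e12 by (simp add: field_simps)
    finally have ex: "exp (-x/2) \<le> 2/3" .
    have "exp (-x/2) * b \<le> (2/3) * b" using ex nn by (intro mult_right_mono) auto
    then have "b/3 \<le> b - exp (-x/2) * b" by linarith
    also have "\<dots> \<le> b - a" using ab by simp
    finally have "b/3 \<le> b - a" .
    then have "(b/3)^2 \<le> (b-a)^2" using nn by (intro power_mono) auto
    moreover have "(b/3)^2 = q/9" using sq by (simp add: power_divide)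
    moreover have "(b-a)^2 = (a-b)^2" by (rule power2_commute)
    ultimately have "q/9 \<le> (a-b)^2" by simp
    then have q18: "q/18 \<le> 1 - (a'*b' + a*b)" unfolding ident by (rule lin1) simp
    have "exp (-x/2) * (exp x * p) \<le> exp (-x/2) * q"
    proof -
      have "exp x * p \<le> exp x * (exp (-x) * q)" using h by (intro mult_left_mono) auto
      also have "\<dots> = q" by (simp add: exp_minus field_simps)
      finally show ?thesis by (intro mult_left_mono) auto
    qed
    moreover have "exp (-x/2) * (exp x * p) = exp (x/2) * p" by (simp add: mult.assoc[symmetric] exp_add[symmetric])
    moreover have "p \<le> exp (x/2) * p" using h p by (simp add: mult_le_cancel_right1)
    ultimately have "p \<le> exp (-x/2) * q" by linarith
    then have "p/18 \<le> exp (-x/2) * (q/18)" by simp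
    also have "\<dots> \<le> exp (-x/2) * (1 - (a'*b' + a*b))" using q18 by (intro mult_left_mono) auto
    finally have P18: "p/18 \<le> exp (-x/2) * (1 - (a'*b' + a*b))" .
    have "c * p \<le> (1/18) * p" using c p by (intro mult_right_mono) auto
    then show ?thesis using P18 by (simp only: mult.commute[of "1/18"])
  next
    assume h: "x \<le> 1 \<and> 2*\<delta> \<le> q - p"
    have "(a' - b') * (a' + b') = a'^2 - b'^2" by (simp add: power2_eq_square algebra_simps)
    then have e: "(a' - b') * (a' + b') = q - p" using sq by simp
    have "a' \<le> 1" "b' \<le> 1" unfolding a'_def b'_def using pb p by auto
    have ab': "b' \<le> a'" unfolding a'_def b'_def using p by (intro real_sqrt_le_mono) simp
    have "(a' - b') * (a' + b') \<le> (a' - b') * 2" using ab' \<open>a' \<le> 1\<close> \<open>b' \<le> 1\<close>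
      by (intro mult_left_mono) auto
    moreover have "2*\<delta> \<le> (a' - b') * (a' + b')" using h e by simp
    ultimately have "2*\<delta> \<le> (a' - b') * 2" by (rule order_trans[rotated])
    then have "\<delta> \<le> a' - b'" by simp
    then have "\<delta>^2 \<le> (a'-b')^2" using d by (intro power_mono) auto
    then have dd: "\<delta>^2/2 \<le> 1 - (a'*b' + a*b)" unfolding ident by (rule lin2) simp
    have "exp (-1/2::real) \<le> exp (-x/2)" using h by simp
    moreover have "exp (-1/2::real) \<ge> 1/2"
    proof -
      have "exp (1/2::real) \<le> 2"
      proof -
        have "exp (1/2::real)^2 = exp 1" by (simp add: power2_eq_square exp_add[symmetric])
        also have "\<dots> \<le> 2^2" using exp_le by simp
        finally have "exp (1/2::real)^2 \<le> 2^2" .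
        then show ?thesis by (rule power2_le_imp_le) simp
      qed
      moreover have "exp (-1/2::real) = 1 / exp (1/2)" by (simp add: exp_minus field_simps)
      ultimately show ?thesis by (simp add: divide_left_mono)
    qed
    ultimately have ex: "1/2 \<le> exp (-x/2)" by (rule order_trans[rotated])
    have "c * p \<le> c" using c pb by (intro mult_left_le) auto
    also have "c \<le> \<delta>^2/4" using c by simp
    also have "\<delta>^2/4 = (1/2) * (\<delta>^2/2)" by simp
    also have "\<dots> \<le> exp (-x/2) * (1 - (a'*b' + a*b))"
      using ex dd d by (intro mult_mono) auto
    finally show ?thesis .
  qed
  then show ?thesis unfolding prod by (simp add: algebra_simps)
qed

lemma exp_half_ln: "z > 0 \<Longrightarrow> exp (ln z / 2) = sqrt z"
  by (rule real_sqrt_unique[symmetric]) (simp_all add: power2_eq_square exp_add[symmetric])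

lemma exp_ln_ratio: assumes "u > 0" "w > 0" shows "exp (-(ln (u/w))/2) * u = sqrt (u*w)"
proof -
  have "-(ln (u/w)) = ln (w/u)" using assms by (simp add: ln_div)
  then have e: "exp (-(ln (u/w))/2) = sqrt (w/u)" using assms by (simp add: exp_half_ln)
  have "sqrt (w/u) * u = sqrt (w/u) * sqrt (u*u)" using assms by simp
  also have "\<dots> = sqrt (w/u * (u*u))" by (simp only: real_sqrt_mult)
  also have "w/u * (u*u) = u*w" using assms by (simp add: field_simps)
  finally show ?thesis using e by simp
qed

lemma pq_props:
  assumes sp: "\<sigma> > 0"
  shows "0 < G \<sigma> 1 (-x)" "G \<sigma> 1 (-x) < 1" "0 < G \<sigma> (-1) (-x)" "G \<sigma> (-1) (-x) < 1"
  using Phi_pos[OF sp] Phi_less1[OF sp] by (simp_all add: Gp_eq Gm_eq sp)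

lemma emeasure_ND_le: assumes sp: "\<sigma> > 0" shows "emeasure (ND 1 \<sigma>) {..vth \<sigma> x} = ennreal (G \<sigma> 1 (-x))"
proof -
  interpret P: prob_space "ND 1 \<sigma>" using sp by (rule prob_ND)
  show ?thesis using sp by (simp add: G_eq Pm_def vth_def P.emeasure_eq_measure)
qed

lemma emeasure_ND_gt: assumes sp: "\<sigma> > 0" shows "emeasure (ND 1 \<sigma>) {vth \<sigma> x<..} = ennreal (1 - G \<sigma> 1 (-x))"
proof -
  interpret P: prob_space "ND 1 \<sigma>" using sp by (rule prob_ND)
  show ?thesis using sp by (simp add: G_eq Pm_compl vth_def P.emeasure_eq_measure)
qed

lemma inner_ind: "\<sigma> > 0 \<Longrightarrow> (\<integral>\<^sup>+y. indicator {..vth \<sigma> x} y \<partial>ND 1 \<sigma>) = ennreal (G \<sigma> 1 (-x))"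
  by (simp add: emeasure_ND_le)

lemma inner_V:
  assumes sp: "\<sigma> > 0"
  shows "(\<integral>\<^sup>+y. ennreal (exp (-(llr_update \<sigma> x (action \<sigma> x y))/2)) \<partial>ND 1 \<sigma>)
    = ennreal (exp (-x/2) * (sqrt ((1 - G \<sigma> 1 (-x))*(1 - G \<sigma> (-1) (-x))) + sqrt (G \<sigma> 1 (-x) * G \<sigma> (-1) (-x))))"
proof -
  define p where "p = G \<sigma> 1 (-x)"
  define q where "q = G \<sigma> (-1) (-x)"
  note pq = pq_props[OF sp, of x, folded p_def q_def]
  define A where "A = exp (-(x + D_plus \<sigma> x)/2)"
  define B where "B = exp (-(x + D_minus \<sigma> x)/2)"
  have "(\<lambda>y. ennreal (exp (-(llr_update \<sigma> x (action \<sigma> x y))/2))) =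
      (\<lambda>y. ennreal A * indicator {vth \<sigma> x<..} y + ennreal B * indicator {..vth \<sigma> x} y)"
  proof (rule ext)
    fix y show "ennreal (exp (-(llr_update \<sigma> x (action \<sigma> x y))/2)) =
      ennreal A * indicator {vth \<sigma> x<..} y + ennreal B * indicator {..vth \<sigma> x} y"
      by (cases "vth \<sigma> x < y") (simp_all add: Fm_eq[OF sp] A_def B_def indicator_def)
  qed
  then have "(\<integral>\<^sup>+y. ennreal (exp (-(llr_update \<sigma> x (action \<sigma> x y))/2)) \<partial>ND 1 \<sigma>)
      = ennreal A * emeasure (ND 1 \<sigma>) {vth \<sigma> x<..} + ennreal B * emeasure (ND 1 \<sigma>) {..vth \<sigma> x}"
    by (simp add: nn_integral_add nn_integral_cmult_indicator)
  also have "\<dots> = ennreal A * ennreal (1 - p) + ennreal B * ennreal p"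
    by (simp add: emeasure_ND_le[OF sp] emeasure_ND_gt[OF sp] p_def)
  also have "\<dots> = ennreal (A * (1 - p)) + ennreal (B * p)"
    using pq unfolding A_def B_def by (simp add: ennreal_mult)
  also have "A * (1 - p) = exp (-x/2) * sqrt ((1-p)*(1-q))"
  proof -
    have "-(x + D_plus \<sigma> x)/2 = -x/2 + (-(ln ((1-p)/(1-q)))/2)"
      unfolding D_plus_def p_def q_def by simp
    then have "A = exp (-x/2) * exp (-(ln ((1-p)/(1-q)))/2)"
      unfolding A_def by (simp only: exp_add)
    then show ?thesis using exp_ln_ratio[of "1-p" "1-q"] pq by simp
  qed
  also have "B * p = exp (-x/2) * sqrt (p*q)"
  proof -
    have "-(x + D_minus \<sigma> x)/2 = -x/2 + (-(ln (p/q)))/2"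
      unfolding D_minus_def p_def q_def by simp
    then have "B = exp (-x/2) * exp (-(ln (p/q))/2)"
      unfolding B_def by (simp only: exp_add)
    then show ?thesis using exp_ln_ratio[of p q] pq by simp
  qed
  also have "ennreal (exp (-x/2) * sqrt ((1-p)*(1-q))) + ennreal (exp (-x/2) * sqrt (p*q))
      = ennreal (exp (-x/2) * sqrt ((1-p)*(1-q)) + exp (-x/2) * sqrt (p*q))"
    using pq by (intro ennreal_plus[symmetric]) auto
  finally show ?thesis unfolding p_def q_def by (simp only: distrib_left)
qed

lemma qp_lower:
  assumes sp: "\<sigma> > 0"
  shows "2 * normal_density 0 \<sigma> (\<bar>x\<bar>*\<sigma>\<^sup>2/2 + 1) \<le> G \<sigma> (-1) (-x) - G \<sigma> 1 (-x)"
proof -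
  define v where "v = -x*\<sigma>\<^sup>2/2"
  have av: "\<bar>v\<bar> = \<bar>x\<bar>*\<sigma>\<^sup>2/2" unfolding v_def by (simp add: abs_mult)
  have "normal_density 0 \<sigma> (\<bar>v\<bar>+1) * ((v+1) - (v-1)) \<le> Phi \<sigma> (v+1) - Phi \<sigma> (v-1)"
    by (rule Phi_diff_lower[OF sp]) auto
  then show ?thesis using sp by (simp add: av Gp_eq Gm_eq v_def abs_mult)
qed

definition cK :: "real \<Rightarrow> real \<Rightarrow> real" where
  "cK \<sigma> K = min (1/18) ((normal_density 0 \<sigma> ((K+1)*\<sigma>\<^sup>2/2 + 1))\<^sup>2/4)"

lemma cK_pos: "\<sigma> > 0 \<Longrightarrow> cK \<sigma> K > 0"
  unfolding cK_def using normal_density_pos[of \<sigma> 0 "(K+1)*\<sigma>\<^sup>2/2 + 1"] by simp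

lemma pointwise_H:
  assumes sp: "\<sigma> > 0" and K: "K > 0" and x: "x > -K"
  shows "exp (-x/2) * (sqrt ((1 - G \<sigma> 1 (-x))*(1 - G \<sigma> (-1) (-x))) + sqrt (G \<sigma> 1 (-x) * G \<sigma> (-1) (-x)))
      + cK \<sigma> K * G \<sigma> 1 (-x) \<le> exp (-x/2)"
proof -
  define \<delta> where "\<delta> = normal_density 0 \<sigma> ((K+1)*\<sigma>\<^sup>2/2 + 1)"
  have d0: "\<delta> > 0" unfolding \<delta>_def by (rule normal_density_pos[OF sp])
  note pq = pq_props[OF sp, of x]
  have qp: "2 * normal_density 0 \<sigma> (\<bar>x\<bar>*\<sigma>\<^sup>2/2 + 1) \<le> G \<sigma> (-1) (-x) - G \<sigma> 1 (-x)"
    by (rule qp_lower[OF sp])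
  have "0 < normal_density 0 \<sigma> (\<bar>x\<bar>*\<sigma>\<^sup>2/2 + 1)" by (rule normal_density_pos[OF sp])
  then have pltq: "G \<sigma> 1 (-x) < G \<sigma> (-1) (-x)" using qp by linarith
  show ?thesis
  proof (rule H_real)
    show "0 < G \<sigma> 1 (-x)" "G \<sigma> 1 (-x) < G \<sigma> (-1) (-x)" "G \<sigma> (-1) (-x) < 1" using pq pltq by auto
    show "cK \<sigma> K \<le> 1/18" "cK \<sigma> K \<le> \<delta>\<^sup>2/4" unfolding cK_def \<delta>_def by auto
    show "cK \<sigma> K \<ge> 0" using less_imp_le[OF cK_pos[OF sp]] .
    show "\<delta> \<ge> 0" using d0 by simp
    show "(1 \<le> x \<and> G \<sigma> 1 (-x) \<le> exp (-x) * G \<sigma> (-1) (-x)) \<or> (x \<le> 1 \<and> 2*\<delta> \<le> G \<sigma> (-1) (-x) - G \<sigma> 1 (-x))"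
    proof (cases "1 \<le> x")
      case True then show ?thesis using p_le_q[OF sp] by auto
    next
      case False
      have "\<bar>x\<bar> \<le> K + 1" using False x K by auto
      then have "\<bar>x\<bar>*\<sigma>\<^sup>2/2 + 1 \<le> (K+1)*\<sigma>\<^sup>2/2 + 1" using sp by (simp add: mult_right_mono divide_right_mono)
      then have "\<delta> \<le> normal_density 0 \<sigma> (\<bar>x\<bar>*\<sigma>\<^sup>2/2 + 1)" unfolding \<delta>_def using sp
        by (intro nd_mono) auto
      then have "2*\<delta> \<le> G \<sigma> (-1) (-x) - G \<sigma> 1 (-x)" using qp by linarith
      then show ?thesis using False by auto
    qed
  qed
qed



lemma (in prob_space) indep_var_nn_integral:
  assumes ind: "indep_var S Z T Y" and \<Phi>: "\<Phi> \<in> borel_measurable (S \<Otimes>\<^sub>M T)"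
  shows "(\<integral>\<^sup>+\<omega>. \<Phi> (Z \<omega>, Y \<omega>) \<partial>M) = (\<integral>\<^sup>+\<omega>. (\<integral>\<^sup>+y. \<Phi> (Z \<omega>, y) \<partial>(distr M T Y)) \<partial>M)"
proof -
  have rv: "random_variable S Z" "random_variable T Y"
    and eq: "distr M S Z \<Otimes>\<^sub>M distr M T Y = distr M (S \<Otimes>\<^sub>M T) (\<lambda>x. (Z x, Y x))"
    using ind[unfolded indep_var_distribution_eq] by auto
  interpret Yd: prob_space "distr M T Y" using rv(2) by (rule prob_space_distr)
  interpret Zd: prob_space "distr M S Z" using rv(1) by (rule prob_space_distr)
  have sets1: "sets (distr M S Z \<Otimes>\<^sub>M distr M T Y) = sets (S \<Otimes>\<^sub>M T)"
    by (intro sets_pair_measure_cong) auto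
  have sets2: "sets (S \<Otimes>\<^sub>M distr M T Y) = sets (S \<Otimes>\<^sub>M T)"
    by (intro sets_pair_measure_cong) auto
  have \<Phi>1: "\<Phi> \<in> borel_measurable (distr M S Z \<Otimes>\<^sub>M distr M T Y)"
    using \<Phi> by (subst measurable_cong_sets[OF sets1 refl])
  have \<Phi>2: "\<Phi> \<in> borel_measurable (S \<Otimes>\<^sub>M distr M T Y)"
    using \<Phi> by (subst measurable_cong_sets[OF sets2 refl])
  have inner: "(\<lambda>z. \<integral>\<^sup>+y. \<Phi> (z, y) \<partial>(distr M T Y)) \<in> borel_measurable S"
    using Yd.borel_measurable_nn_integral_fst[OF \<Phi>2] .
  have "(\<integral>\<^sup>+\<omega>. \<Phi> (Z \<omega>, Y \<omega>) \<partial>M) = (\<integral>\<^sup>+p. \<Phi> p \<partial>(distr M (S \<Otimes>\<^sub>M T) (\<lambda>x. (Z x, Y x))))"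
    using rv \<Phi> by (subst nn_integral_distr) (auto intro: measurable_Pair)
  also have "\<dots> = (\<integral>\<^sup>+p. \<Phi> p \<partial>(distr M S Z \<Otimes>\<^sub>M distr M T Y))" by (simp add: eq)
  also have "\<dots> = (\<integral>\<^sup>+z. (\<integral>\<^sup>+y. \<Phi> (z, y) \<partial>(distr M T Y)) \<partial>(distr M S Z))"
    using Yd.nn_integral_fst[OF \<Phi>1] by simp
  also have "\<dots> = (\<integral>\<^sup>+\<omega>. (\<integral>\<^sup>+y. \<Phi> (Z \<omega>, y) \<partial>(distr M T Y)) \<partial>M)"
    using rv inner by (subst nn_integral_distr) auto
  finally show ?thesis .
qed

locale SL = prob_space M for M :: "'a measure" +
  fixes s :: "nat \<Rightarrow> 'a \<Rightarrow> real" and \<sigma> :: real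
  assumes sp: "\<sigma> > 0" and ind: "indep_vars (\<lambda>_. borel) s UNIV"
    and dist: "\<And>n. distributed M lborel (s n) (\<lambda>x. ennreal (sig_density \<sigma> 1 x))"
begin

definition e :: "nat \<Rightarrow> 'a \<Rightarrow> real" where "e n \<omega> = ell_aux \<sigma> (\<lambda>k. s k \<omega>) n"

lemma s_meas[measurable]: "s n \<in> borel_measurable M"
  using distributed_measurable[OF dist[of n]] by simp

lemma e_0[simp]: "e 0 \<omega> = 0" by (simp add: e_def)

lemma e_Suc: "e (Suc n) \<omega> = (if vth \<sigma> (e n \<omega>) < s n \<omega> then e n \<omega> + D_plus \<sigma> (e n \<omega>) else e n \<omega> + D_minus \<sigma> (e n \<omega>))"
  by (simp add: e_def Fm_eq[OF sp])

lemma e_meas[measurable]: "e n \<in> borel_measurable M"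
proof (induction n)
  case 0 then show ?case by simp
next
  case (Suc n)
  have [measurable]: "D_plus \<sigma> \<in> borel_measurable borel" "D_minus \<sigma> \<in> borel_measurable borel"
    using sp by (auto intro: Dp_meas Dm_meas)
  note [measurable] = Suc
  have "e (Suc n) = (\<lambda>\<omega>. if vth \<sigma> (e n \<omega>) < s n \<omega> then e n \<omega> + D_plus \<sigma> (e n \<omega>) else e n \<omega> + D_minus \<sigma> (e n \<omega>))"
    by (rule ext) (rule e_Suc)
  also have "\<dots> \<in> borel_measurable M" unfolding vth_def by measurable
  finally show ?case .
qed

lemma distr_s: "distr M borel (s n) = ND 1 \<sigma>"
proof -
  have "distr M borel (s n) = distr M lborel (s n)" by (rule distr_cong) auto
  also have "\<dots> = density lborel (\<lambda>x. ennreal (sig_density \<sigma> 1 x))"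
    by (rule distributed_distr_eq_density[OF dist])
  finally show ?thesis by (simp add: sig_density_def)
qed

definition X :: "nat \<Rightarrow> 'a \<Rightarrow> (nat \<Rightarrow> real)" where "X n \<omega> = restrict (\<lambda>i. s i \<omega>) {..<n}"

definition Y :: "nat \<Rightarrow> 'a \<Rightarrow> (nat \<Rightarrow> real)" where "Y n \<omega> = restrict (\<lambda>i. s i \<omega>) {n}"

lemma indep_X: "indep_var (PiM {..<n} (\<lambda>_. borel)) (X n) (PiM {n} (\<lambda>_. borel)) (Y n)"
  unfolding X_def Y_def by (rule indep_var_restrict[OF ind]) auto

lemma Y_meas[measurable]: "Y n \<in> measurable M (PiM {n} (\<lambda>_. borel))"
  unfolding Y_def by measurable

lemma distr_Y_integral:
  assumes [measurable]: "\<Psi> \<in> borel_measurable borel"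
  shows "(\<integral>\<^sup>+g. \<Psi> (g n) \<partial>distr M (PiM {n} (\<lambda>_. borel)) (Y n)) = (\<integral>\<^sup>+y. \<Psi> y \<partial>ND 1 \<sigma>)"
proof -
  have c: "(\<lambda>g. g n) \<in> measurable (PiM {n} (\<lambda>_. borel)) (borel :: real measure)"
    by (rule measurable_component_singleton) auto
  have "(\<integral>\<^sup>+g. \<Psi> (g n) \<partial>distr M (PiM {n} (\<lambda>_. borel)) (Y n)) = (\<integral>\<^sup>+\<omega>. \<Psi> (Y n \<omega> n) \<partial>M)"
    using c by (subst nn_integral_distr) auto
  also have "\<dots> = (\<integral>\<^sup>+\<omega>. \<Psi> (s n \<omega>) \<partial>M)" by (simp add: Y_def)
  also have "\<dots> = (\<integral>\<^sup>+y. \<Psi> y \<partial>distr M borel (s n))" by (subst nn_integral_distr) auto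
  finally show ?thesis by (simp add: distr_s)
qed

lemma e_X: "m \<le> n \<Longrightarrow> e m \<omega> = ell_aux \<sigma> (X n \<omega>) m"
  unfolding e_def X_def by (rule ell_aux_cong) auto

lemma indep_integral:
  assumes "\<Phi> \<in> borel_measurable (PiM {..<n} (\<lambda>_. borel) \<Otimes>\<^sub>M borel)"
  shows "(\<integral>\<^sup>+\<omega>. \<Phi> (X n \<omega>, s n \<omega>) \<partial>M) = (\<integral>\<^sup>+\<omega>. (\<integral>\<^sup>+y. \<Phi> (X n \<omega>, y) \<partial>ND 1 \<sigma>) \<partial>M)"
proof -
  define \<Phi>' where "\<Phi>' p = \<Phi> (fst p, snd p n)" for p :: "(nat \<Rightarrow> real) \<times> (nat \<Rightarrow> real)"
  have c: "(\<lambda>g. g n) \<in> measurable (PiM {n} (\<lambda>_. borel)) (borel :: real measure)"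
    by (rule measurable_component_singleton) auto
  have m: "\<Phi>' \<in> borel_measurable (PiM {..<n} (\<lambda>_. borel) \<Otimes>\<^sub>M PiM {n} (\<lambda>_. borel))"
    unfolding \<Phi>'_def using assms c by measurable
  have "(\<integral>\<^sup>+\<omega>. \<Phi> (X n \<omega>, s n \<omega>) \<partial>M) = (\<integral>\<^sup>+\<omega>. \<Phi>' (X n \<omega>, Y n \<omega>) \<partial>M)"
    by (simp add: \<Phi>'_def Y_def)
  also have "\<dots> = (\<integral>\<^sup>+\<omega>. (\<integral>\<^sup>+g. \<Phi>' (X n \<omega>, g) \<partial>distr M (PiM {n} (\<lambda>_. borel)) (Y n)) \<partial>M)"
    by (rule indep_var_nn_integral[OF indep_X m])
  also have "\<dots> = (\<integral>\<^sup>+\<omega>. (\<integral>\<^sup>+y. \<Phi> (X n \<omega>, y) \<partial>ND 1 \<sigma>) \<partial>M)"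
  proof (rule nn_integral_cong)
    fix \<omega> assume "\<omega> \<in> space M"
    then have "X n \<omega> \<in> space (PiM {..<n} (\<lambda>_. borel))" unfolding X_def by (simp add: space_PiM PiE_iff)
    then have "(\<lambda>y. \<Phi> (X n \<omega>, y)) \<in> borel_measurable borel"
      using assms by (rule measurable_compose_Pair1)
    then show "(\<integral>\<^sup>+g. \<Phi>' (X n \<omega>, g) \<partial>distr M (PiM {n} (\<lambda>_. borel)) (Y n)) = (\<integral>\<^sup>+y. \<Phi> (X n \<omega>, y) \<partial>ND 1 \<sigma>)"
      unfolding \<Phi>'_def by (simp add: distr_Y_integral[where \<Psi>="\<lambda>y. \<Phi> (X n \<omega>, y)"])
  qed
  finally show ?thesis .
qed

definition AK :: "real \<Rightarrow> nat \<Rightarrow> 'a set" where "AK K n = {\<omega> \<in> space M. \<forall>m\<le>n. -K < e m \<omega>}"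
definition Mi :: "nat \<Rightarrow> 'a set" where "Mi n = {\<omega> \<in> space M. s n \<omega> \<le> vth \<sigma> (e n \<omega>)}"
definition uK :: "real \<Rightarrow> nat \<Rightarrow> ennreal" where
  "uK K n = (\<integral>\<^sup>+\<omega>. ennreal (exp (-(e n \<omega>)/2)) * indicator (AK K n) \<omega> \<partial>M)"

lemma AK_sets[measurable]: "AK K n \<in> sets M"
proof -
  have "AK K n = space M \<inter> (\<Inter>m\<in>{..n}. {\<omega> \<in> space M. -K < e m \<omega>})" unfolding AK_def by auto
  also have "\<dots> \<in> sets M" by (intro sets.Int sets.top sets.finite_INT) auto
  finally show ?thesis .
qed

lemma Mi_sets[measurable]: "Mi n \<in> sets M"
  unfolding Mi_def vth_def by measurable

lemma AK_Suc_sub: "AK K (Suc n) \<subseteq> AK K n" unfolding AK_def by auto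

definition Fx :: "real \<Rightarrow> real \<Rightarrow> real" where
  "Fx x y = (if vth \<sigma> x < y then x + D_plus \<sigma> x else x + D_minus \<sigma> x)"

lemma Fx_meas[measurable]: "(\<lambda>p. Fx (f p) (g p)) \<in> borel_measurable N"
  if [measurable]: "f \<in> borel_measurable N" "g \<in> borel_measurable N"
proof -
  have [measurable]: "D_plus \<sigma> \<in> borel_measurable borel" "D_minus \<sigma> \<in> borel_measurable borel"
    using sp by (auto intro: Dp_meas Dm_meas)
  show ?thesis unfolding Fx_def vth_def by measurable
qed

lemma e_Suc_Fx: "e (Suc n) \<omega> = Fx (e n \<omega>) (s n \<omega>)"
  unfolding Fx_def by (rule e_Suc)

lemma step_ineq:
  assumes K: "K > 0"
  shows "uK K (Suc n) + ennreal (exp (K/2)) * emeasure M (AK K n - AK K (Suc n))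
      + ennreal (cK \<sigma> K) * emeasure M (Mi n \<inter> AK K n) \<le> uK K n"
proof -
  define c where "c = cK \<sigma> K"
  have c0: "c > 0" unfolding c_def by (rule cK_pos[OF sp])
  define PM where "PM = PiM {..<n} (\<lambda>_. borel :: real measure)"
  define S where "S = {f \<in> space PM. \<forall>m\<le>n. -K < ell_aux \<sigma> f m}"
  have Em[measurable]: "\<And>m. m \<le> n \<Longrightarrow> (\<lambda>f. ell_aux \<sigma> f m) \<in> borel_measurable PM"
    unfolding PM_def using sp by (rule ell_aux_meas_Pi)
  have S_sets: "S \<in> sets PM"
  proof -
    have "S = space PM \<inter> (\<Inter>m\<in>{..n}. {f \<in> space PM. -K < ell_aux \<sigma> f m})" unfolding S_def by auto
    also have "\<dots> \<in> sets PM" by (intro sets.Int sets.top sets.finite_INT) auto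
    finally show ?thesis .
  qed
  define \<Phi> where "\<Phi> p = (if fst p \<in> S then ennreal (exp (-(Fx (ell_aux \<sigma> (fst p) n) (snd p))/2))
      + (if snd p \<le> vth \<sigma> (ell_aux \<sigma> (fst p) n) then ennreal c else 0) else 0)" for p
  have [measurable]: "(\<lambda>p. ell_aux \<sigma> (fst p) n) \<in> borel_measurable (PM \<Otimes>\<^sub>M borel)"
    using Em[of n] by measurable
  have [measurable]: "Measurable.pred (PM \<Otimes>\<^sub>M borel) (\<lambda>p. fst p \<in> S)"
    using S_sets by measurable
  have \<Phi>m: "\<Phi> \<in> borel_measurable (PM \<Otimes>\<^sub>M borel)"
    unfolding \<Phi>_def vth_def by measurable
  have XS: "X n \<omega> \<in> S \<longleftrightarrow> \<omega> \<in> AK K n" if "\<omega> \<in> space M" for \<omega>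
  proof -
    have "X n \<omega> \<in> space PM" unfolding X_def PM_def by (simp add: space_PiM PiE_iff)
    then show ?thesis using that unfolding S_def AK_def by (auto simp: e_X)
  qed
  have eXn: "ell_aux \<sigma> (X n \<omega>) n = e n \<omega>" for \<omega> using e_X[of n n \<omega>] by simp
  have pw: "ennreal (exp (-(e (Suc n) \<omega>)/2)) * indicator (AK K (Suc n)) \<omega>
      + ennreal (exp (K/2)) * indicator (AK K n - AK K (Suc n)) \<omega>
      + ennreal c * indicator (Mi n \<inter> AK K n) \<omega> \<le> \<Phi> (X n \<omega>, s n \<omega>)" if \<omega>: "\<omega> \<in> space M" for \<omega>
  proof -
    have \<Phi>\<omega>: "\<Phi> (X n \<omega>, s n \<omega>) = (if \<omega> \<in> AK K n then ennreal (exp (-(e (Suc n) \<omega>)/2))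
      + (if \<omega> \<in> Mi n then ennreal c else 0) else 0)"
      unfolding \<Phi>_def using XS[OF \<omega>] \<omega> by (simp add: eXn e_Suc_Fx Mi_def)
    show ?thesis
    proof (cases "\<omega> \<in> AK K n")
      case False
      then have "\<omega> \<notin> AK K (Suc n)" using AK_Suc_sub by auto
      then show ?thesis using False \<Phi>\<omega> by simp
    next
      case A: True
      show ?thesis
      proof (cases "\<omega> \<in> AK K (Suc n)")
        case True then show ?thesis using A \<Phi>\<omega> by (simp add: indicator_def)
      next
        case False
        then have "\<not> (-K < e (Suc n) \<omega>)" using A \<omega> unfolding AK_def by (auto simp: le_Suc_eq)
        then have "exp (K/2) \<le> exp (-(e (Suc n) \<omega>)/2)" by simp
        then have "ennreal (exp (K/2)) \<le> ennreal (exp (-(e (Suc n) \<omega>)/2))" by (rule ennreal_leI)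
        then show ?thesis using A False \<Phi>\<omega> by (auto simp: indicator_def intro: add_mono)
      qed
    qed
  qed
  have "uK K (Suc n) + ennreal (exp (K/2)) * emeasure M (AK K n - AK K (Suc n))
      + ennreal c * emeasure M (Mi n \<inter> AK K n)
      = (\<integral>\<^sup>+\<omega>. ennreal (exp (-(e (Suc n) \<omega>)/2)) * indicator (AK K (Suc n)) \<omega>
      + ennreal (exp (K/2)) * indicator (AK K n - AK K (Suc n)) \<omega>
      + ennreal c * indicator (Mi n \<inter> AK K n) \<omega> \<partial>M)"
    unfolding uK_def by (simp add: nn_integral_add nn_integral_cmult_indicator)
  also have "\<dots> \<le> (\<integral>\<^sup>+\<omega>. \<Phi> (X n \<omega>, s n \<omega>) \<partial>M)"
    by (intro nn_integral_mono pw)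
  also have "\<dots> = (\<integral>\<^sup>+\<omega>. (\<integral>\<^sup>+y. \<Phi> (X n \<omega>, y) \<partial>ND 1 \<sigma>) \<partial>M)"
    using indep_integral[of \<Phi> n] \<Phi>m unfolding PM_def by simp
  also have "\<dots> \<le> (\<integral>\<^sup>+\<omega>. ennreal (exp (-(e n \<omega>)/2)) * indicator (AK K n) \<omega> \<partial>M)"
  proof (rule nn_integral_mono)
    fix \<omega> assume \<omega>: "\<omega> \<in> space M"
    show "(\<integral>\<^sup>+y. \<Phi> (X n \<omega>, y) \<partial>ND 1 \<sigma>) \<le> ennreal (exp (-(e n \<omega>)/2)) * indicator (AK K n) \<omega>"
    proof (cases "\<omega> \<in> AK K n")
      case False then show ?thesis using XS[OF \<omega>] unfolding \<Phi>_def by simp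
    next
      case True
      define x where "x = e n \<omega>"
      have x: "x > -K" using True unfolding AK_def x_def by auto
      have "(\<integral>\<^sup>+y. \<Phi> (X n \<omega>, y) \<partial>ND 1 \<sigma>) = (\<integral>\<^sup>+y. ennreal (exp (-(Fx x y)/2))
          + ennreal c * indicator {..vth \<sigma> x} y \<partial>ND 1 \<sigma>)"
        using True XS[OF \<omega>] unfolding \<Phi>_def x_def by (intro nn_integral_cong) (auto simp: indicator_def eXn)
      also have "\<dots> = (\<integral>\<^sup>+y. ennreal (exp (-(Fx x y)/2)) \<partial>ND 1 \<sigma>) + ennreal c * (\<integral>\<^sup>+y. indicator {..vth \<sigma> x} y \<partial>ND 1 \<sigma>)"
        unfolding vth_def by (simp add: nn_integral_add nn_integral_cmult)
      also have "(\<integral>\<^sup>+y. ennreal (exp (-(Fx x y)/2)) \<partial>ND 1 \<sigma>) = (\<integral>\<^sup>+y. ennreal (exp (-(llr_update \<sigma> x (action \<sigma> x y))/2)) \<partial>ND 1 \<sigma>)"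
        unfolding Fx_def by (simp add: Fm_eq[OF sp])
      also have "\<dots> = ennreal (exp (-x/2) * (sqrt ((1 - G \<sigma> 1 (-x))*(1 - G \<sigma> (-1) (-x))) + sqrt (G \<sigma> 1 (-x) * G \<sigma> (-1) (-x))))"
        by (rule inner_V[OF sp])
      also have "(\<integral>\<^sup>+y. indicator {..vth \<sigma> x} y \<partial>ND 1 \<sigma>) = ennreal (G \<sigma> 1 (-x))"
        by (rule inner_ind[OF sp])
      also have "ennreal (exp (-x/2) * (sqrt ((1 - G \<sigma> 1 (-x))*(1 - G \<sigma> (-1) (-x))) + sqrt (G \<sigma> 1 (-x) * G \<sigma> (-1) (-x))))
          + ennreal c * ennreal (G \<sigma> 1 (-x))
          = ennreal (exp (-x/2) * (sqrt ((1 - G \<sigma> 1 (-x))*(1 - G \<sigma> (-1) (-x))) + sqrt (G \<sigma> 1 (-x) * G \<sigma> (-1) (-x)))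
          + c * G \<sigma> 1 (-x))"
        using pq_props[OF sp, of x] c0 by (simp add: ennreal_mult ennreal_plus)
      also have "\<dots> \<le> ennreal (exp (-x/2))"
        using pointwise_H[OF sp K x] unfolding c_def by (rule ennreal_leI)
      finally show ?thesis using True unfolding x_def by simp
    qed
  qed
  finally show ?thesis unfolding uK_def c_def .
qed

lemma AK0: "K > 0 \<Longrightarrow> AK K 0 = space M" unfolding AK_def by auto

lemma uK0: "K > 0 \<Longrightarrow> uK K 0 = 1"
  unfolding uK_def using AK0[of K] by (simp add: emeasure_space_1)

lemma tele:
  assumes K: "K > 0"
  shows "uK K n + ennreal (exp (K/2)) * emeasure M (space M - AK K n)
      + ennreal (cK \<sigma> K) * (\<Sum>k<n. emeasure M (Mi k \<inter> AK K k)) \<le> 1"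
proof (induction n)
  case 0 then show ?case using uK0[OF K] AK0[OF K] by simp
next
  case (Suc n)
  define E where "E = ennreal (exp (K/2))"
  define c where "c = ennreal (cK \<sigma> K)"
  define a where "a = emeasure M (space M - AK K n)"
  define b where "b = emeasure M (AK K n - AK K (Suc n))"
  define m where "m = emeasure M (Mi n \<inter> AK K n)"
  define S where "S = (\<Sum>k<n. emeasure M (Mi k \<inter> AK K k))"
  have ab: "emeasure M (space M - AK K (Suc n)) = a + b"
  proof -
    have "space M - AK K (Suc n) = (space M - AK K n) \<union> (AK K n - AK K (Suc n))"
      using AK_Suc_sub[of K n] AK_sets[of K n] sets.sets_into_space by blast
    then show ?thesis unfolding a_def b_def by (simp only:) (rule plus_emeasure[symmetric], auto)
  qed
  have st: "uK K (Suc n) + E * b + c * m \<le> uK K n" unfolding E_def b_def c_def m_def by (rule step_ineq[OF K])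
  have "uK K (Suc n) + E * emeasure M (space M - AK K (Suc n)) + c * (\<Sum>k<Suc n. emeasure M (Mi k \<inter> AK K k))
      = (uK K (Suc n) + E * b + c * m) + (E * a + c * S)"
    unfolding ab S_def m_def by (simp add: distrib_left add_ac)
  also have "\<dots> \<le> uK K n + (E * a + c * S)" using st by (rule add_right_mono)
  also have "\<dots> \<le> 1" using Suc unfolding E_def c_def a_def S_def by (simp add: add_ac)
  finally show ?case unfolding E_def c_def .
qed

lemma compl_small:
  assumes K: "K > 0" shows "emeasure M (space M - AK K n) \<le> ennreal (exp (-K/2))"
proof -
  have h0: "0 + ennreal (exp (K/2)) * emeasure M (space M - AK K n) + 0 \<le> uK K n + ennreal (exp (K/2)) * emeasure M (space M - AK K n)
      + ennreal (cK \<sigma> K) * (\<Sum>k<n. emeasure M (Mi k \<inter> AK K k))"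
    by (intro add_mono) auto
  have "ennreal (exp (K/2)) * emeasure M (space M - AK K n) \<le> 1"
    using order_trans[OF h0 tele[OF K, of n]] by simp
  then have "ennreal (exp (-K/2)) * (ennreal (exp (K/2)) * emeasure M (space M - AK K n)) \<le> ennreal (exp (-K/2)) * 1"
    by (rule mult_left_mono) simp
  moreover have "ennreal (exp (-K/2)) * ennreal (exp (K/2)) = 1"
    by (simp add: ennreal_mult[symmetric] exp_add[symmetric])
  ultimately show ?thesis by (simp add: mult.assoc[symmetric])
qed

lemma sum_small:
  assumes K: "K > 0" shows "(\<Sum>k<n. measure M (Mi k \<inter> AK K k)) \<le> 1 / cK \<sigma> K"
proof -
  have h0: "0 + 0 + ennreal (cK \<sigma> K) * (\<Sum>k<n. emeasure M (Mi k \<inter> AK K k)) \<le> uK K n + ennreal (exp (K/2)) * emeasure M (space M - AK K n)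
      + ennreal (cK \<sigma> K) * (\<Sum>k<n. emeasure M (Mi k \<inter> AK K k))"
    by (intro add_mono) auto
  have "ennreal (cK \<sigma> K) * (\<Sum>k<n. emeasure M (Mi k \<inter> AK K k)) \<le> 1"
    using order_trans[OF h0 tele[OF K, of n]] by simp
  moreover have "(\<Sum>k<n. emeasure M (Mi k \<inter> AK K k)) = ennreal (\<Sum>k<n. measure M (Mi k \<inter> AK K k))"
    by (simp add: emeasure_eq_measure sum_ennreal)
  ultimately have "ennreal (cK \<sigma> K * (\<Sum>k<n. measure M (Mi k \<inter> AK K k))) \<le> 1"
    using cK_pos[OF sp, of K] by (simp add: ennreal_mult sum_nonneg)
  then have "cK \<sigma> K * (\<Sum>k<n. measure M (Mi k \<inter> AK K k)) \<le> 1"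
    by (simp add: ennreal_le_1)
  then show ?thesis using cK_pos[OF sp, of K] by (simp add: field_simps)
qed

definition AKinf :: "real \<Rightarrow> 'a set" where "AKinf K = (\<Inter>n. AK K n)"

lemma AKinf_sets[measurable]: "AKinf K \<in> sets M"
  unfolding AKinf_def by (intro sets.countable_INT) auto

lemma AKinf_compl: assumes K: "K > 0" shows "emeasure M (space M - AKinf K) \<le> ennreal (exp (-K/2))"
proof -
  have "space M - AKinf K = (\<Union>n. space M - AK K n)" unfolding AKinf_def by auto
  moreover have "emeasure M (\<Union>n. space M - AK K n) = (SUP n. emeasure M (space M - AK K n))"
  proof (rule SUP_emeasure_incseq[symmetric])
    show "range (\<lambda>n. space M - AK K n) \<subseteq> sets M" by auto
    show "incseq (\<lambda>n. space M - AK K n)"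
      by (rule incseq_SucI) (use AK_Suc_sub in blast)
  qed
  moreover have "(SUP n. emeasure M (space M - AK K n)) \<le> ennreal (exp (-K/2))"
    by (rule SUP_least) (rule compl_small[OF K])
  ultimately show ?thesis by simp
qed

lemma limsup_null: assumes K: "K > 0" shows "limsup (\<lambda>k. Mi k \<inter> AK K k) \<in> null_sets M"
proof (rule borel_cantelli_limsup1)
  show "\<And>n. Mi n \<inter> AK K n \<in> sets M" by auto
  show "\<And>n. emeasure M (Mi n \<inter> AK K n) < \<infinity>" by (simp add: emeasure_eq_measure)
  show "summable (\<lambda>n. measure M (Mi n \<inter> AK K n))"
    by (rule summableI_nonneg_bounded[where x="1 / cK \<sigma> K"]) (auto intro: sum_small[OF K])
qed

definition Bad :: "nat \<Rightarrow> 'a set" where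
  "Bad k = limsup (\<lambda>j. Mi j \<inter> AK (real (Suc k)) j) \<union> (space M - AKinf (real (Suc k)))"

lemma Bad_sets[measurable]: "Bad k \<in> sets M"
  unfolding Bad_def by (intro sets.Un sets.Diff sets.top measurable_limsup) auto

lemma Bad_small: "emeasure M (Bad k) \<le> ennreal (exp (-(real (Suc k))/2))"
proof -
  have K: "real (Suc k) > 0" by simp
  have "emeasure M (Bad k) \<le> emeasure M (limsup (\<lambda>j. Mi j \<inter> AK (real (Suc k)) j)) + emeasure M (space M - AKinf (real (Suc k)))"
    unfolding Bad_def by (rule emeasure_subadditive) (auto intro: measurable_limsup)
  also have "\<dots> \<le> 0 + ennreal (exp (-(real (Suc k))/2))"
    using limsup_null[OF K] AKinf_compl[OF K] by (intro add_mono) auto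
  finally show ?thesis by simp
qed

lemma N_null: "(\<Inter>k. Bad k) \<in> null_sets M"
proof -
  have meas: "(\<Inter>k. Bad k) \<in> sets M" by (intro sets.countable_INT) auto
  have le: "emeasure M (\<Inter>k. Bad k) \<le> ennreal (exp (-(real (Suc k))/2))" for k
  proof -
    have "emeasure M (\<Inter>k. Bad k) \<le> emeasure M (Bad k)" by (rule emeasure_mono) auto
    also have "\<dots> \<le> ennreal (exp (-(real (Suc k))/2))" by (rule Bad_small)
    finally show ?thesis .
  qed
  have lim0: "(\<lambda>k. exp (-(real (Suc k))/2)) \<longlonglongrightarrow> (0::real)"
    by real_asymp
  have "(\<lambda>k. ennreal (exp (-(real (Suc k))/2))) \<longlonglongrightarrow> ennreal 0"
    by (rule tendsto_ennrealI[OF lim0])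
  then have "emeasure M (\<Inter>k. Bad k) \<le> ennreal 0"
    by (rule LIMSEQ_le_const) (use le in auto)
  then show ?thesis using meas by (simp add: null_sets_def)
qed

lemma good_omega:
  assumes \<omega>: "\<omega> \<in> space M" and nb: "\<omega> \<notin> Bad k"
  shows "(\<lambda>t. public_llr \<sigma> (\<lambda>n. s n \<omega>) t / ((2 * sqrt 2 / \<sigma>) * sqrt (ln (real t)))) \<longlonglongrightarrow> 1"
proof -
  define K where "K = real (Suc k)"
  have nl: "\<omega> \<notin> limsup (\<lambda>j. Mi j \<inter> AK K j)" and inA: "\<omega> \<in> AKinf K"
    using nb \<omega> unfolding Bad_def K_def by auto
  have "eventually (\<lambda>j. \<omega> \<notin> Mi j \<inter> AK K j) sequentially"
    using nl by (auto simp: limsup_INF_SUP eventually_sequentially)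
  moreover have "\<And>j. \<omega> \<in> AK K j" using inA unfolding AKinf_def by auto
  ultimately have "eventually (\<lambda>j. \<omega> \<notin> Mi j) sequentially" by (auto elim: eventually_mono)
  then obtain T where T: "\<And>j. j \<ge> T \<Longrightarrow> \<omega> \<notin> Mi j" unfolding eventually_sequentially by blast
  have rec: "e (Suc j) \<omega> = e j \<omega> + D_plus \<sigma> (e j \<omega>)" if "j \<ge> T" for j
    using T[OF that] \<omega> unfolding Mi_def by (simp add: e_Suc not_le)
  have "(\<lambda>t. e (t - 1) \<omega> / ((2 * sqrt 2 / \<sigma>) * sqrt (ln (real t)))) \<longlonglongrightarrow> 1"
    by (rule det_final[where x="\<lambda>j. e j \<omega>" and T=T, OF sp]) (use rec in simp)
  then show ?thesis by (simp add: public_llr_def e_def)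
qed

theorem main_AE:
  "AE \<omega> in M. (\<lambda>t. public_llr \<sigma> (\<lambda>n. s n \<omega>) t / ((2 * sqrt 2 / \<sigma>) * sqrt (ln (real t)))) \<longlonglongrightarrow> 1"
proof (rule AE_I'[OF N_null])
  show "{\<omega> \<in> space M. \<not> (\<lambda>t. public_llr \<sigma> (\<lambda>n. s n \<omega>) t / ((2 * sqrt 2 / \<sigma>) * sqrt (ln (real t)))) \<longlonglongrightarrow> 1}
      \<subseteq> (\<Inter>k. Bad k)"
    using good_omega by blast
qed

end


theorem theorem4:
  fixes M :: "'a measure" and s :: "nat \<Rightarrow> 'a \<Rightarrow> real" and \<sigma> :: real
  assumes "prob_space M"
    and "\<sigma> > 0"
    and "prob_space.indep_vars M (\<lambda>_. borel) s UNIV"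
    and "\<And>n. distributed M lborel (s n) (\<lambda>x. ennreal (sig_density \<sigma> 1 x))"
  shows "AE \<omega> in M.
    (\<lambda>t. public_llr \<sigma> (\<lambda>n. s n \<omega>) t / ((2 * sqrt 2 / \<sigma>) * sqrt (ln (real t))))
      \<longlonglongrightarrow> 1"
proof -
  interpret SL M s \<sigma>
  proof (rule SL.intro[OF assms(1)], rule SL_axioms.intro)
    show "\<sigma> > 0" by (rule assms(2))
    show "prob_space.indep_vars M (\<lambda>_. borel) s UNIV" by (rule assms(3))
    show "\<And>n. distributed M lborel (s n) (\<lambda>x. ennreal (sig_density \<sigma> 1 x))" by (rule assms(4))
  qed
  show ?thesis by (rule main_AE)
qed

end
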